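(* Let $K$ be a field, let $A$ be a finitely presented $K$-algebra, and let $I$ be a right ideal of $A$ that is finitely presented as a right $A$-module. If $AI=A$, then the subalgebra $K+I$ (where $K$ denotes $K\cdot 1_A$) is a finitely presented $K$-algebra.
   Context: A $K$-algebra (associative, with $1$) is finitely presented if it is isomorphic to the free associative $K$-algebra on finitely many generators modulo a two-sided ideal generated by finitely many elements. A right $A$-module $V$ is finitely presented if $V\cong F/U$ with $F$ a finitely generated free right $A$-module and $U$ a finitely generated submodule. $AI$ denotes the additive subgroup spanned by all products $ai$ with $a\in A$, $i\in I$. *)

theory Defs
  imports Main "HOL-Library.Poly_Mapping"
begin

definition k_algebra :: "('k::field \<Rightarrow> 'a::ring_1) \<Rightarrow> bool" where
  "k_algebra \<phi> \<longleftrightarrow> \<phi> 1 = 1 \<and> (\<forall>x y. \<phi> (x + y) = \<phi> x + \<phi> y)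
     \<and> (\<forall>x y. \<phi> (x * y) = \<phi> x * \<phi> y) \<and> (\<forall>c a. \<phi> c * a = a * \<phi> c)"

datatype word = Word (letters: "nat list")

instantiation word :: monoid_add
begin
definition zero_word :: word where "zero_word = Word []"
definition plus_word :: "word \<Rightarrow> word \<Rightarrow> word" where
  "plus_word u v = Word (letters u @ letters v)"
instance by standard (auto simp: zero_word_def plus_word_def)
end

text \<open>The free associative K-algebra (noncommutative polynomials) with
  multiplication the convolution over word concatenation.\<close>
type_synonym 'k free_alg = "word \<Rightarrow>\<^sub>0 'k"

definition free_alg_n :: "nat \<Rightarrow> 'k::field free_alg set" where
  "free_alg_n n = {p. \<forall>w \<in> Poly_Mapping.keys p. set (letters w) \<subseteq> {..<n}}"

definition fa_eval :: "('k::field \<Rightarrow> 'a::ring_1) \<Rightarrow> (nat \<Rightarrow> 'a) \<Rightarrow> 'k free_alg \<Rightarrow> 'a" where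
  "fa_eval \<phi> g p = (\<Sum>w \<in> Poly_Mapping.keys p. \<phi> (Poly_Mapping.lookup p w) * prod_list (map g (letters w)))"

definition fa_ideal_gen :: "nat \<Rightarrow> 'k::field free_alg set \<Rightarrow> 'k free_alg set" where
  "fa_ideal_gen n R = {(\<Sum>j<m. u j * r j * v j) | (m::nat) u r v.
       \<forall>j<m. u j \<in> free_alg_n n \<and> r j \<in> R \<and> v j \<in> free_alg_n n}"

definition fp_algebra :: "('k::field \<Rightarrow> 'a::ring_1) \<Rightarrow> 'a set \<Rightarrow> bool" where
  "fp_algebra \<phi> S \<longleftrightarrow> (\<exists>n g R. (\<forall>i<n. g i \<in> S) \<and> S = fa_eval \<phi> g ` free_alg_n n
      \<and> finite R \<and> R \<subseteq> free_alg_n n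
      \<and> {p \<in> free_alg_n n. fa_eval \<phi> g p = 0} = fa_ideal_gen n R)"

definition right_ideal :: "'a::ring_1 set \<Rightarrow> bool" where
  "right_ideal I \<longleftrightarrow> 0 \<in> I \<and> (\<forall>x\<in>I. \<forall>y\<in>I. x + y \<in> I) \<and> (\<forall>x\<in>I. - x \<in> I)
     \<and> (\<forall>x\<in>I. \<forall>a. x * a \<in> I)"

text \<open>A right ideal I is finitely presented as a right A-module: I = F/U with
  F = A^n free and U finitely generated; i.e. there is a surjective right module
  map A^n -> I, (a_i) |-> sum b_i a_i, whose kernel is a finitely generated right
  submodule of A^n. Elements of A^n are functions nat => A vanishing at i >= n.\<close>
definition fp_right_ideal :: "'a::ring_1 set \<Rightarrow> bool" where
  "fp_right_ideal I \<longleftrightarrow> (\<exists>n (b :: nat \<Rightarrow> 'a). (\<forall>i<n. b i \<in> I)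
     \<and> I = {(\<Sum>i<n. b i * a i) | a. True}
     \<and> (\<exists>(m::nat) (rel :: nat \<Rightarrow> nat \<Rightarrow> 'a). (\<forall>j<m. \<forall>i\<ge>n. rel j i = 0)
         \<and> {a. (\<forall>i\<ge>n. a i = 0) \<and> (\<Sum>i<n. b i * a i) = 0}
           = {(\<lambda>i. \<Sum>j<m. rel j i * c j) | c. True}))"

definition left_span :: "'a::ring_1 set \<Rightarrow> 'a set" where
  "left_span I = {(\<Sum>k<m. a k * x k) | (m::nat) a x. \<forall>k<m. x k \<in> I}"

end

theory Submission
  imports Defs
begin
lemma fa_expansion: "(p::'b::monoid_add \<Rightarrow>\<^sub>0 'c::comm_monoid_add) = (\<Sum>w\<in>Poly_Mapping.keys p. Poly_Mapping.single w (Poly_Mapping.lookup p w))"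
proof (rule poly_mapping_eqI)
  fix v
  have "Poly_Mapping.lookup (\<Sum>w\<in>Poly_Mapping.keys p. Poly_Mapping.single w (Poly_Mapping.lookup p w)) v
     = (\<Sum>w\<in>Poly_Mapping.keys p. Poly_Mapping.lookup (Poly_Mapping.single w (Poly_Mapping.lookup p w)) v)"
    by (simp add: lookup_sum)
  also have "\<dots> = (\<Sum>w\<in>Poly_Mapping.keys p. if w = v then Poly_Mapping.lookup p w else 0)"
    by (rule sum.cong) (auto simp: lookup_single when_def)
  also have "\<dots> = (if v \<in> Poly_Mapping.keys p then Poly_Mapping.lookup p v else 0)"
    by (simp add: sum.delta')
  also have "\<dots> = Poly_Mapping.lookup p v"
    by (simp add: in_keys_iff)
  finally show "Poly_Mapping.lookup p v = Poly_Mapping.lookup (\<Sum>w\<in>Poly_Mapping.keys p. Poly_Mapping.single w (Poly_Mapping.lookup p w)) v" by simp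
qed

lemma fa_induct:
  fixes p :: "'b::monoid_add \<Rightarrow>\<^sub>0 'c::comm_monoid_add"
  assumes "P 0" "\<And>w c. w \<in> Poly_Mapping.keys p \<Longrightarrow> P (Poly_Mapping.single w c)"
    "\<And>a b. P a \<Longrightarrow> P b \<Longrightarrow> P (a + b)"
  shows "P p"
proof -
  have "\<And>S. S \<subseteq> Poly_Mapping.keys p \<Longrightarrow> P (\<Sum>w\<in>S. Poly_Mapping.single w (Poly_Mapping.lookup p w))"
  proof -
    fix S assume S: "S \<subseteq> Poly_Mapping.keys p"
    have "finite S" using S finite_subset finite_keys by blast
    then show "P (\<Sum>w\<in>S. Poly_Mapping.single w (Poly_Mapping.lookup p w))" using S
    proof (induction S rule: finite_induct)
      case empty then show ?case using assms(1) by simp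
    next
      case (insert x F)
      have a: "P (Poly_Mapping.single x (Poly_Mapping.lookup p x))" using insert.prems by (intro assms(2)) simp
      have b: "P (\<Sum>w\<in>F. Poly_Mapping.single w (Poly_Mapping.lookup p w))" using insert.prems by (intro insert.IH) simp
      show ?case unfolding sum.insert[OF insert.hyps] by (rule assms(3)[OF a b])
    qed
  qed
  from this[OF order_refl] show ?thesis by (simp only: fa_expansion[symmetric])
qed

abbreviation sc :: "'k::field \<Rightarrow> 'k free_alg" where "sc c \<equiv> Poly_Mapping.single (0::word) c"
definition Xg :: "nat \<Rightarrow> 'k::field free_alg" where "Xg t = Poly_Mapping.single (Word [t]) 1"

lemma letters_plus[simp]: "letters (u + v) = letters u @ letters v"
  by (simp add: plus_word_def)
lemma letters_zero[simp]: "letters 0 = []"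
  by (simp add: zero_word_def)

lemma sc_comm: "(x::'k::field free_alg) * sc c = sc c * x"
proof (induction x rule: fa_induct)
  case (2 w c')
  then show ?case by (simp add: mult_single mult.commute)
qed (auto simp: distrib_left distrib_right)

lemma sc_mult: "sc a * sc b = sc (a * b)" by (simp add: mult_single)
lemma sc_add: "sc a + sc b = sc (a + b)" by (simp add: single_add)

lemma Fn_0[simp,intro]: "0 \<in> free_alg_n n" by (simp add: free_alg_n_def)
lemma Fn_single[intro]: "set (letters w) \<subseteq> {..<n} \<Longrightarrow> Poly_Mapping.single w c \<in> free_alg_n n"
  by (simp add: free_alg_n_def)
lemma Fn_sc[simp,intro]: "sc c \<in> free_alg_n n" by (simp add: free_alg_n_def)
lemma Fn_1[simp,intro]: "1 \<in> free_alg_n n" by (simp add: free_alg_n_def)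
lemma Fn_X[intro]: "t < n \<Longrightarrow> Xg t \<in> free_alg_n n" by (simp add: free_alg_n_def Xg_def)
lemma Fn_add[intro]: "p \<in> free_alg_n n \<Longrightarrow> q \<in> free_alg_n n \<Longrightarrow> p + q \<in> free_alg_n n"
  using keys_add[of p q] by (auto simp: free_alg_n_def)
lemma Fn_uminus[intro]: "p \<in> free_alg_n n \<Longrightarrow> - p \<in> free_alg_n n"
  by (auto simp: free_alg_n_def)
lemma Fn_diff[intro]: "p \<in> free_alg_n n \<Longrightarrow> q \<in> free_alg_n n \<Longrightarrow> p - q \<in> free_alg_n n"
  using Fn_add[of p n "-q"] Fn_uminus[of q n] by simp
lemma Fn_mult[intro]: "p \<in> free_alg_n n \<Longrightarrow> q \<in> free_alg_n n \<Longrightarrow> p * q \<in> free_alg_n n"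
  using keys_mult[of p q] unfolding free_alg_n_def by fastforce
lemma Fn_sum[intro]: "(\<And>i. i \<in> S \<Longrightarrow> f i \<in> free_alg_n n) \<Longrightarrow> sum f S \<in> free_alg_n n"
  by (induction S rule: infinite_finite_induct) auto

context fixes \<phi> :: "'k::field \<Rightarrow> 'a::ring_1" assumes kalg: "k_algebra \<phi>"
begin

lemma phi_add: "\<phi> (x + y) = \<phi> x + \<phi> y" using kalg unfolding k_algebra_def by blast
lemma phi_mult: "\<phi> (x * y) = \<phi> x * \<phi> y" using kalg unfolding k_algebra_def by blast
lemma phi_1: "\<phi> 1 = 1" using kalg unfolding k_algebra_def by blast
lemma phi_central: "\<phi> c * a = a * \<phi> c" using kalg unfolding k_algebra_def by blast
lemma phi_0: "\<phi> 0 = 0" using phi_add[of 0 0] by simp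
lemma phi_uminus: "\<phi> (- x) = - \<phi> x" using minus_unique[of "\<phi> x" "\<phi> (-x)"] phi_add[of x "-x"] phi_0 by simp

lemma fa_eval_single: "fa_eval \<phi> g (Poly_Mapping.single w c) = \<phi> c * prod_list (map g (letters w))"
  by (simp add: fa_eval_def phi_0)

lemma fa_eval_0[simp]: "fa_eval \<phi> g 0 = 0" by (simp add: fa_eval_def)

lemma fa_eval_add: "fa_eval \<phi> g (p + q) = fa_eval \<phi> g p + fa_eval \<phi> g q"
  unfolding fa_eval_def
  by (rule setsum_keys_plus_distrib) (simp_all add: phi_0 phi_add distrib_right)

lemma fa_eval_uminus: "fa_eval \<phi> g (- p) = - fa_eval \<phi> g p"
  using minus_unique[of "fa_eval \<phi> g p" "fa_eval \<phi> g (-p)"] fa_eval_add[of g p "-p"] by simp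

lemma fa_eval_diff: "fa_eval \<phi> g (p - q) = fa_eval \<phi> g p - fa_eval \<phi> g q"
  using fa_eval_add[of g p "-q"] fa_eval_uminus[of g q] by simp

lemma fa_eval_sum: "fa_eval \<phi> g (sum f S) = (\<Sum>i\<in>S. fa_eval \<phi> g (f i))"
  by (induction S rule: infinite_finite_induct) (auto simp: fa_eval_add)

lemma fa_eval_sc: "fa_eval \<phi> g (sc c) = \<phi> c" by (simp add: fa_eval_single)
lemma fa_eval_1: "fa_eval \<phi> g 1 = 1" using fa_eval_sc[of g 1] by (simp add: phi_1)
lemma fa_eval_X: "fa_eval \<phi> g (Xg t) = g t" by (simp add: Xg_def fa_eval_single phi_1)

lemma fa_eval_mult: "fa_eval \<phi> g (p * q) = fa_eval \<phi> g p * fa_eval \<phi> g q"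
proof (induction p rule: fa_induct)
  case 1 then show ?case by simp
next
  case (3 a b) then show ?case by (simp add: distrib_right fa_eval_add)
next
  case (2 u c)
  show ?case
  proof (induction q rule: fa_induct)
    case 1 then show ?case by simp
  next
    case (3 a b) then show ?case by (simp add: distrib_left fa_eval_add)
  next
    case (2 v c')
    have "fa_eval \<phi> g (Poly_Mapping.single u c * Poly_Mapping.single v c')
       = \<phi> c * \<phi> c' * (prod_list (map g (letters u)) * prod_list (map g (letters v)))"
      by (simp add: mult_single fa_eval_single phi_mult)
    also have "\<dots> = \<phi> c * prod_list (map g (letters u)) * (\<phi> c' * prod_list (map g (letters v)))"
    proof -
      have e: "\<phi> c' * prod_list (map g (letters u)) = prod_list (map g (letters u)) * \<phi> c'" by (rule phi_central)
      have "\<phi> c * \<phi> c' * (prod_list (map g (letters u)) * prod_list (map g (letters v)))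
         = \<phi> c * ((\<phi> c' * prod_list (map g (letters u))) * prod_list (map g (letters v)))"
        by (simp only: mult.assoc)
      also have "\<dots> = \<phi> c * ((prod_list (map g (letters u)) * \<phi> c') * prod_list (map g (letters v)))"
        by (simp only: e)
      also have "\<dots> = \<phi> c * prod_list (map g (letters u)) * (\<phi> c' * prod_list (map g (letters v)))"
        by (simp only: mult.assoc)
      finally show ?thesis .
    qed
    finally show ?case by (simp only: fa_eval_single)
  qed
qed

end

lemma J_iff: "a \<in> fa_ideal_gen n R \<longleftrightarrow> (\<exists>(m::nat) u r v. a = (\<Sum>j<m. u j * r j * v j) \<and> (\<forall>j<m. u j \<in> free_alg_n n \<and> r j \<in> R \<and> v j \<in> free_alg_n n))"
  unfolding fa_ideal_gen_def by blast

lemma J_0[simp,intro]: "0 \<in> fa_ideal_gen n R"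
  unfolding fa_ideal_gen_def by (rule CollectI, rule exI[of _ 0]) auto

lemma J_add_term:
  assumes "a \<in> fa_ideal_gen n R" "x \<in> free_alg_n n" "r \<in> R" "y \<in> free_alg_n n"
  shows "a + x * r * y \<in> fa_ideal_gen n R"
proof -
  obtain m :: nat and u rr v where a: "a = (\<Sum>j<m. u j * rr j * v j)"
    and h: "\<forall>j<m. u j \<in> free_alg_n n \<and> rr j \<in> R \<and> v j \<in> free_alg_n n"
    using assms(1) unfolding J_iff by blast
  have "a + x * r * y = (\<Sum>j<Suc m. (u(m:=x)) j * (rr(m:=r)) j * (v(m:=y)) j)"
    by (simp add: a)
  moreover have "\<forall>j<Suc m. (u(m:=x)) j \<in> free_alg_n n \<and> (rr(m:=r)) j \<in> R \<and> (v(m:=y)) j \<in> free_alg_n n"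
    using h assms by (auto simp: less_Suc_eq)
  ultimately show ?thesis unfolding J_iff by blast
qed

lemma J_add:
  assumes a: "a \<in> fa_ideal_gen n R" and b: "b \<in> fa_ideal_gen n R"
  shows "a + b \<in> fa_ideal_gen n R"
proof -
  obtain m :: nat and u rr v where bb: "b = (\<Sum>j<m. u j * rr j * v j)"
    and h: "\<forall>j<m. u j \<in> free_alg_n n \<and> rr j \<in> R \<and> v j \<in> free_alg_n n"
    using b unfolding J_iff by blast
  have "k \<le> m \<Longrightarrow> a + (\<Sum>j<k. u j * rr j * v j) \<in> fa_ideal_gen n R" for k
  proof (induction k)
    case 0 then show ?case using a by simp
  next
    case (Suc k)
    then have "a + (\<Sum>j<k. u j * rr j * v j) + u k * rr k * v k \<in> fa_ideal_gen n R"
      using h by (intro J_add_term) auto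
    then show ?case by (simp add: add.assoc)
  qed
  then show ?thesis using bb by simp
qed

lemma J_sub: "R \<subseteq> free_alg_n n \<Longrightarrow> fa_ideal_gen n R \<subseteq> free_alg_n n"
  unfolding fa_ideal_gen_def by (auto intro!: Fn_sum Fn_mult)

lemma J_gen: "r \<in> R \<Longrightarrow> r \<in> fa_ideal_gen n R"
  using J_add_term[of 0 n R 1 r 1] by simp

lemma J_lmult:
  assumes "a \<in> fa_ideal_gen n R" "x \<in> free_alg_n n"
  shows "x * a \<in> fa_ideal_gen n R"
proof -
  obtain m :: nat and u rr v where a: "a = (\<Sum>j<m. u j * rr j * v j)"
    and h: "\<forall>j<m. u j \<in> free_alg_n n \<and> rr j \<in> R \<and> v j \<in> free_alg_n n"
    using assms(1) unfolding J_iff by blast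
  have "x * a = (\<Sum>j<m. (x * u j) * rr j * v j)" by (simp add: a sum_distrib_left mult.assoc)
  moreover have "\<forall>j<m. x * u j \<in> free_alg_n n \<and> rr j \<in> R \<and> v j \<in> free_alg_n n"
    using h assms by auto
  ultimately show ?thesis unfolding J_iff
    by (intro exI[of _ m] exI[of _ "\<lambda>j. x * u j"] exI[of _ rr] exI[of _ v]) simp
qed

lemma J_rmult:
  assumes "a \<in> fa_ideal_gen n R" "x \<in> free_alg_n n"
  shows "a * x \<in> fa_ideal_gen n R"
proof -
  obtain m :: nat and u rr v where a: "a = (\<Sum>j<m. u j * rr j * v j)"
    and h: "\<forall>j<m. u j \<in> free_alg_n n \<and> rr j \<in> R \<and> v j \<in> free_alg_n n"
    using assms(1) unfolding J_iff by blast
  have "a * x = (\<Sum>j<m. u j * rr j * (v j * x))" by (simp add: a sum_distrib_right mult.assoc)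
  moreover have "\<forall>j<m. u j \<in> free_alg_n n \<and> rr j \<in> R \<and> v j * x \<in> free_alg_n n"
    using h assms by auto
  ultimately show ?thesis unfolding J_iff
    by (intro exI[of _ m] exI[of _ u] exI[of _ rr] exI[of _ "\<lambda>j. v j * x"]) simp
qed

lemma J_uminus: "a \<in> fa_ideal_gen n R \<Longrightarrow> - a \<in> fa_ideal_gen n R"
  using J_lmult[of a n R "-1"] by (simp add: Fn_uminus)

lemma J_diff: "a \<in> fa_ideal_gen n R \<Longrightarrow> b \<in> fa_ideal_gen n R \<Longrightarrow> a - b \<in> fa_ideal_gen n R"
  using J_add[of a n R "-b"] J_uminus[of b] by simp

lemma J_sum: "(\<And>i. i \<in> S \<Longrightarrow> f i \<in> fa_ideal_gen n R) \<Longrightarrow> sum f S \<in> fa_ideal_gen n R"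
  by (induction S rule: infinite_finite_induct) (auto intro: J_add)

lemma J_eval:
  assumes "k_algebra \<phi>" "\<forall>r\<in>R. fa_eval \<phi> g r = 0" "x \<in> fa_ideal_gen n R"
  shows "fa_eval \<phi> g x = 0"
  using assms(3) unfolding fa_ideal_gen_def
  using assms(1,2) by (auto simp: fa_eval_sum fa_eval_mult)

definition cong :: "nat \<Rightarrow> 'k::field free_alg set \<Rightarrow> 'k free_alg \<Rightarrow> 'k free_alg \<Rightarrow> bool" where
  "cong n R p q \<longleftrightarrow> p \<in> free_alg_n n \<and> q \<in> free_alg_n n \<and> p - q \<in> fa_ideal_gen n R"

lemma cong_refl: "p \<in> free_alg_n n \<Longrightarrow> cong n R p p" by (simp add: cong_def)
lemma cong_eq: "p = q \<Longrightarrow> p \<in> free_alg_n n \<Longrightarrow> cong n R p q" by (simp add: cong_def)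
lemma cong_sym: "cong n R p q \<Longrightarrow> cong n R q p"
  unfolding cong_def using J_uminus by fastforce
lemma cong_trans: "cong n R p q \<Longrightarrow> cong n R q r \<Longrightarrow> cong n R p r"
  unfolding cong_def using J_add by fastforce
lemma cong_add: "cong n R p q \<Longrightarrow> cong n R p' q' \<Longrightarrow> cong n R (p + p') (q + q')"
  unfolding cong_def using J_add[of "p - q" n R "p' - q'"] by (auto simp: algebra_simps)
lemma cong_uminus: "cong n R p q \<Longrightarrow> cong n R (- p) (- q)"
  unfolding cong_def using J_uminus[of "p - q" n R] by (auto simp: algebra_simps)
lemma cong_diff: "cong n R p q \<Longrightarrow> cong n R p' q' \<Longrightarrow> cong n R (p - p') (q - q')"
  using cong_add[of n R p q "-p'" "-q'"] cong_uminus by fastforce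
lemma cong_mult: "cong n R p q \<Longrightarrow> cong n R p' q' \<Longrightarrow> cong n R (p * p') (q * q')"
proof -
  assume a: "cong n R p q" "cong n R p' q'"
  have "p * p' - q * q' = (p - q) * p' + q * (p' - q')" by (simp add: algebra_simps)
  moreover have "(p - q) * p' \<in> fa_ideal_gen n R" using a by (auto simp: cong_def intro: J_rmult)
  moreover have "q * (p' - q') \<in> fa_ideal_gen n R" using a by (auto simp: cong_def intro: J_lmult)
  ultimately show ?thesis using a by (auto simp: cong_def intro: J_add)
qed
lemma cong_sum: "(\<And>i. i \<in> S \<Longrightarrow> cong n R (f i) (g i)) \<Longrightarrow> cong n R (sum f S) (sum g S)"
proof (induction S rule: infinite_finite_induct)
  case (insert x F) then show ?case by (simp add: cong_add)
qed (auto simp: cong_def)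
lemma cong_gen: "r \<in> R \<Longrightarrow> r \<in> free_alg_n n \<Longrightarrow> cong n R r 0"
  by (simp add: cong_def J_gen)
lemma cong_J: "x \<in> fa_ideal_gen n R \<Longrightarrow> x \<in> free_alg_n n \<Longrightarrow> cong n R x 0"
  by (simp add: cong_def)
lemma cong_F1: "cong n R p q \<Longrightarrow> p \<in> free_alg_n n" by (simp add: cong_def)
lemma cong_F2: "cong n R p q \<Longrightarrow> q \<in> free_alg_n n" by (simp add: cong_def)

lemma fa_induct_F[consumes 1, case_names zero single add]:
  assumes p: "p \<in> free_alg_n n" and "P 0"
    and "\<And>w c. set (letters w) \<subseteq> {..<n} \<Longrightarrow> P (Poly_Mapping.single w c)"
    and "\<And>a b. a \<in> free_alg_n n \<Longrightarrow> b \<in> free_alg_n n \<Longrightarrow> P a \<Longrightarrow> P b \<Longrightarrow> P (a + b)"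
  shows "P p"
proof -
  have "p \<in> free_alg_n n \<and> P p"
  proof (induction p rule: fa_induct)
    case 1 then show ?case using assms(2) by simp
  next
    case (2 w c)
    then have "set (letters w) \<subseteq> {..<n}" using p by (auto simp: free_alg_n_def)
    then show ?case using assms(3) by (auto intro: Fn_single)
  next
    case (3 a b) then show ?case using assms(4) by (auto intro: Fn_add)
  qed
  then show ?thesis by simp
qed

lemma single_Cons: "Poly_Mapping.single (Word (t # w)) (1::'k::field) = Xg t * Poly_Mapping.single (Word w) 1"
  by (simp add: Xg_def mult_single plus_word_def)

lemma single_sc: "Poly_Mapping.single w c = sc c * Poly_Mapping.single w (1::'k::field)"
  by (simp add: mult_single)

lemma section_kernel:
  fixes \<phi> :: "'k::field \<Rightarrow> 'a::ring_1"
  assumes kalg: "k_algebra \<phi>"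
    and gB: "\<forall>t<N. g t \<in> B"
    and Badd: "\<forall>x\<in>B. \<forall>y\<in>B. x + y \<in> B" and Bmul: "\<forall>x\<in>B. \<forall>y\<in>B. x * y \<in> B"
    and Bsc: "\<forall>c. \<phi> c \<in> B"
    and sadd: "\<forall>x\<in>B. \<forall>y\<in>B. cong N R' (s (x + y)) (s x + s y)"
    and smul: "\<forall>x\<in>B. \<forall>y\<in>B. cong N R' (s (x * y)) (s x * s y)"
    and ssc: "\<forall>c. cong N R' (s (\<phi> c)) (sc c)"
    and sgen: "\<forall>t<N. cong N R' (s (g t)) (Xg t)"
    and p: "p \<in> free_alg_n N"
  shows "fa_eval \<phi> g p \<in> B \<and> cong N R' p (s (fa_eval \<phi> g p))"
proof -
  have w: "prod_list (map g w) \<in> B \<and> cong N R' (s (prod_list (map g w))) (Poly_Mapping.single (Word w) 1)"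
    if "set w \<subseteq> {..<N}" for w
    using that
  proof (induction w)
    case Nil
    then show ?case using Bsc[rule_format, of 1] ssc[rule_format, of 1] by (simp add: phi_1[OF kalg] zero_word_def)
  next
    case (Cons t w)
    then have t: "t < N" and IH: "prod_list (map g w) \<in> B"
      "cong N R' (s (prod_list (map g w))) (Poly_Mapping.single (Word w) 1)" by auto
    have "cong N R' (s (g t * prod_list (map g w))) (s (g t) * s (prod_list (map g w)))"
      using smul gB t IH by blast
    moreover have "cong N R' (s (g t) * s (prod_list (map g w))) (Xg t * Poly_Mapping.single (Word w) 1)"
      using cong_mult sgen t IH by blast
    ultimately show ?case using Bmul gB t IH by (auto simp: single_Cons intro: cong_trans)
  qed
  show ?thesis using p
  proof (induction p rule: fa_induct_F)
    case zero
    then show ?case using Bsc[rule_format, of 0] ssc[rule_format, of 0] phi_0[OF kalg]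
      by (auto intro: cong_sym simp: fa_eval_0[OF kalg])
  next
    case (single w c)
    then have ww: "set (letters w) \<subseteq> {..<N}" by simp
    have e: "fa_eval \<phi> g (Poly_Mapping.single w c) = \<phi> c * prod_list (map g (letters w))"
      by (rule fa_eval_single[OF kalg])
    have c1: "cong N R' (s (\<phi> c * prod_list (map g (letters w)))) (s (\<phi> c) * s (prod_list (map g (letters w))))"
      using smul Bsc w[OF ww] by blast
    have c2: "cong N R' (s (\<phi> c) * s (prod_list (map g (letters w)))) (sc c * Poly_Mapping.single (Word (letters w)) 1)"
      using cong_mult ssc w[OF ww] by blast
    have "cong N R' (s (fa_eval \<phi> g (Poly_Mapping.single w c))) (Poly_Mapping.single w c)"
    proof -
      have "Poly_Mapping.single w c = sc c * Poly_Mapping.single (Word (letters w)) 1"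
        by (simp add: single_sc[of w c])
      then show ?thesis unfolding e using c1 c2 by (metis cong_trans)
    qed
    then show ?case using e Bmul Bsc w[OF ww] by (auto intro: cong_sym)
  next
    case (add a b)
    have e: "fa_eval \<phi> g (a + b) = fa_eval \<phi> g a + fa_eval \<phi> g b" by (rule fa_eval_add[OF kalg])
    have "cong N R' (s (fa_eval \<phi> g a + fa_eval \<phi> g b)) (s (fa_eval \<phi> g a) + s (fa_eval \<phi> g b))"
      using sadd add by blast
    then have "cong N R' (a + b) (s (fa_eval \<phi> g a + fa_eval \<phi> g b))"
      using add by (meson cong_add cong_sym cong_trans)
    then show ?case using e add Badd by auto
  qed
qed

locale comb =
  fixes n m pp :: nat and R :: "'k::field free_alg set"
    and \<delta> \<beta> :: "nat \<Rightarrow> 'k free_alg" and relt :: "nat \<Rightarrow> nat \<Rightarrow> 'k free_alg"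
  assumes R_F: "R \<subseteq> free_alg_n n" and R_fin: "finite R"
    and \<delta>_F: "\<And>l. \<delta> l \<in> free_alg_n n" and \<beta>_F: "\<And>k. \<beta> k \<in> free_alg_n n"
    and relt_F: "\<And>j i. relt j i \<in> free_alg_n n"
begin

definition xe :: "nat \<Rightarrow> nat \<Rightarrow> nat \<Rightarrow> nat" where "xe j i l = (j * m + i) * m + l"
definition xb :: "nat \<Rightarrow> nat" where "xb l = Suc n * m * m + l"
definition NN :: nat where "NN = Suc n * m * m + m"

lemma xe_lt': "j \<le> n \<Longrightarrow> i < m \<Longrightarrow> l < m \<Longrightarrow> xe j i l < Suc n * m * m"
proof -
  assume a: "j \<le> n" "i < m" "l < m"
  have "xe j i l < (j * m + i) * m + m" using a by (simp add: xe_def)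
  also have "\<dots> = (j * m + i + 1) * m" by (simp add: algebra_simps)
  also have "\<dots> \<le> (n * m + m) * m"
  proof (rule mult_le_mono1)
    have "j * m \<le> n * m" using a by simp
    then show "j * m + i + 1 \<le> n * m + m" using a by linarith
  qed
  also have "\<dots> = Suc n * m * m" by (simp add: algebra_simps)
  finally show ?thesis .
qed

lemma xe_lt: "j \<le> n \<Longrightarrow> i < m \<Longrightarrow> l < m \<Longrightarrow> xe j i l < NN"
  using xe_lt'[of j i l] by (simp add: NN_def)

lemma xb_lt: "l < m \<Longrightarrow> xb l < NN" by (simp add: xb_def NN_def)

lemma Xe_F[intro]: "j \<le> n \<Longrightarrow> i < m \<Longrightarrow> l < m \<Longrightarrow> Xg (xe j i l) \<in> free_alg_n NN"
  using xe_lt by (intro Fn_X)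
lemma Xb_F[intro]: "l < m \<Longrightarrow> Xg (xb l) \<in> free_alg_n NN"
  using xb_lt by (intro Fn_X)

fun Mw :: "nat list \<Rightarrow> nat \<Rightarrow> nat \<Rightarrow> 'k free_alg" where
  "Mw [] i l = Xg (xe n i l)"
| "Mw (j # w) i l = (\<Sum>t<m. Xg (xe j i t) * Mw w t l)"

definition Phi :: "'k free_alg \<Rightarrow> nat \<Rightarrow> nat \<Rightarrow> 'k free_alg" where
  "Phi p i l = (\<Sum>w\<in>Poly_Mapping.keys p. sc (Poly_Mapping.lookup p w) * Mw (letters w) i l)"

definition xt :: "nat \<Rightarrow> 'k free_alg" where "xt j = (if j < n then Xg j else 1)"

definition Tm :: "'k \<Rightarrow> (nat \<Rightarrow> 'k free_alg) \<Rightarrow> 'k free_alg" where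
  "Tm c q = sc c + (\<Sum>i<m. \<Sum>l<m. Phi (q i) i l * Xg (xb l))"

definition RR :: "'k free_alg set" where
  "RR = (\<lambda>(r, i, l). Phi r i l) ` (R \<times> {..<m} \<times> {..<m})
    \<union> (\<lambda>(i, l). (\<Sum>t<m. Xg (xe n i t) * Xg (xe n t l)) - Xg (xe n i l)) ` ({..<m} \<times> {..<m})
    \<union> (\<lambda>(j, i, l). (\<Sum>t<m. Xg (xe n i t) * Xg (xe j t l)) - Xg (xe j i l)) ` ({..<n} \<times> {..<m} \<times> {..<m})
    \<union> (\<lambda>(j, i, l). Xg (xe j i l) - (\<Sum>l'<m. Phi (xt j * \<delta> l) i l' * Xg (xb l'))) ` ({..n} \<times> {..<m} \<times> {..<m})
    \<union> (\<lambda>l. Xg (xb l) - (\<Sum>l'<m. Phi 1 l l' * Xg (xb l'))) ` {..<m}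
    \<union> (\<lambda>(j, k). \<Sum>i<m. Phi (relt j i) i k) ` ({..<pp} \<times> {..<m})
    \<union> (\<lambda>(j, k, l, l'). Xg (xb l) * Xg (xe j k l') - Phi (\<beta> k * xt j) l l') ` ({..n} \<times> {..<m} \<times> {..<m} \<times> {..<m})"

abbreviation cg where "cg \<equiv> cong NN RR"

lemma Mw_F[intro]: "set w \<subseteq> {..n} \<Longrightarrow> i < m \<Longrightarrow> l < m \<Longrightarrow> Mw w i l \<in> free_alg_n NN"
  by (induction w arbitrary: i) (auto intro!: Fn_sum Fn_mult)

lemma keys_Fn: "p \<in> free_alg_n n \<Longrightarrow> w \<in> Poly_Mapping.keys p \<Longrightarrow> set (letters w) \<subseteq> {..n}"
  unfolding free_alg_n_def by fastforce

lemma Phi_F[intro]: "p \<in> free_alg_n n \<Longrightarrow> i < m \<Longrightarrow> l < m \<Longrightarrow> Phi p i l \<in> free_alg_n NN"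
  unfolding Phi_def
  by (intro Fn_sum Fn_mult Fn_sc Mw_F keys_Fn) auto

lemma xt_F[intro]: "xt j \<in> free_alg_n n"
  by (auto simp: xt_def intro: Fn_X)

lemma RR_fin: "finite RR"
  unfolding RR_def using R_fin by auto

lemma RR_F: "RR \<subseteq> free_alg_n NN"
  unfolding RR_def using R_F \<delta>_F \<beta>_F relt_F
  by (auto intro!: Fn_sum Fn_mult Fn_diff Phi_F)

lemma cg_rel: "a - b \<in> RR \<Longrightarrow> a \<in> free_alg_n NN \<Longrightarrow> b \<in> free_alg_n NN \<Longrightarrow> cg a b"
  by (simp add: cong_def J_gen)

lemma cg_rel0: "a \<in> RR \<Longrightarrow> cg a 0"
  using RR_F by (simp add: cong_def J_gen subset_iff)

lemma RR_a: "Phi r i l \<in> RR" if "r \<in> R" "i < m" "l < m"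
  unfolding RR_def by (rule UnI1, rule UnI1, rule UnI1, rule UnI1, rule UnI1, rule UnI1, rule image_eqI[where x="(r, i, l)"]) (use that in auto)

lemma RR_b1: "(\<Sum>t<m. Xg (xe n i t) * Xg (xe n t l)) - Xg (xe n i l) \<in> RR" if "i < m" "l < m"
  unfolding RR_def by (rule UnI1, rule UnI1, rule UnI1, rule UnI1, rule UnI1, rule UnI2, rule image_eqI[where x="(i, l)"]) (use that in auto)

lemma RR_b2: "(\<Sum>t<m. Xg (xe n i t) * Xg (xe j t l)) - Xg (xe j i l) \<in> RR" if "j < n" "i < m" "l < m"
  unfolding RR_def by (rule UnI1, rule UnI1, rule UnI1, rule UnI1, rule UnI2, rule image_eqI[where x="(j, i, l)"]) (use that in auto)

lemma RR_c: "Xg (xe j i l) - (\<Sum>l'<m. Phi (xt j * \<delta> l) i l' * Xg (xb l')) \<in> RR" if "j \<le> n" "i < m" "l < m"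
  unfolding RR_def by (rule UnI1, rule UnI1, rule UnI1, rule UnI2, rule image_eqI[where x="(j, i, l)"]) (use that in auto)

lemma RR_d: "Xg (xb l) - (\<Sum>l'<m. Phi 1 l l' * Xg (xb l')) \<in> RR" if "l < m"
  unfolding RR_def by (rule UnI1, rule UnI1, rule UnI2, rule image_eqI[where x="l"]) (use that in auto)

lemma RR_e: "(\<Sum>i<m. Phi (relt j i) i k) \<in> RR" if "j < pp" "k < m"
  unfolding RR_def by (rule UnI1, rule UnI2, rule image_eqI[where x="(j, k)"]) (use that in auto)

lemma RR_f: "Xg (xb l) * Xg (xe j k l') - Phi (\<beta> k * xt j) l l' \<in> RR" if "j \<le> n" "k < m" "l < m" "l' < m"
  unfolding RR_def by (rule UnI2, rule image_eqI[where x="(j, k, l, l')"]) (use that in auto)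

lemma Phi_0[simp]: "Phi 0 i l = 0" by (simp add: Phi_def)

lemma Phi_add: "Phi (p + q) i l = Phi p i l + Phi q i l"
  unfolding Phi_def
  by (rule setsum_keys_plus_distrib) (simp_all add: single_add distrib_right)

lemma Phi_single: "Phi (Poly_Mapping.single w c) i l = sc c * Mw (letters w) i l"
  by (simp add: Phi_def)

lemma Phi_uminus: "Phi (- p) i l = - Phi p i l"
  using minus_unique[of "Phi p i l" "Phi (-p) i l"] Phi_add[of p "-p" i l] by simp

lemma Phi_diff: "Phi (p - q) i l = Phi p i l - Phi q i l"
  using Phi_add[of p "-q" i l] Phi_uminus[of q i l] by simp

lemma Phi_sum: "Phi (sum f S) i l = (\<Sum>x\<in>S. Phi (f x) i l)"
  by (induction S rule: infinite_finite_induct) (auto simp: Phi_add)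

lemma Phi_sc_mult: "Phi (sc c * p) i l = sc c * Phi p i l"
proof (induction p rule: fa_induct)
  case 1 then show ?case by (simp only: mult_zero_right Phi_0)
next
  case (2 w a) then show ?case by (simp add: mult_single Phi_single mult.assoc[symmetric])
next
  case (3 a b) then show ?case by (simp add: distrib_left Phi_add)
qed

lemma Phi_1: "Phi 1 i l = Xg (xe n i l)"
  using Phi_single[of 0 1 i l] by simp

end

lemma sum_swap_mult:
  fixes a :: "'b \<Rightarrow> 'r::semiring_0"
  shows "(\<Sum>t\<in>A. a t * (\<Sum>s\<in>B. b t s * c s)) = (\<Sum>s\<in>B. (\<Sum>t\<in>A. a t * b t s) * c s)"
  by (simp add: sum_distrib_left sum_distrib_right mult.assoc) (rule sum.swap)

lemma sc_pull: "sc c * x * (sc c' * y) = sc (c * c') * (x * y)"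
proof -
  have "x * (sc c' * y) = (x * sc c') * y" by (simp only: mult.assoc)
  also have "\<dots> = (sc c' * x) * y" by (rule arg_cong[where f="\<lambda>z. z * y"], rule sc_comm)
  finally have e: "x * (sc c' * y) = sc c' * (x * y)" by (simp only: mult.assoc)
  have "sc c * x * (sc c' * y) = sc c * (x * (sc c' * y))" by (simp only: mult.assoc)
  also have "\<dots> = (sc c * sc c') * (x * y)" by (simp only: e mult.assoc)
  finally show ?thesis by (simp only: sc_mult)
qed

context comb begin

lemma cg_refl: "p \<in> free_alg_n NN \<Longrightarrow> cg p p" by (rule cong_refl)

lemma Mw_append:
  assumes "set u \<subseteq> {..<n}" "set v \<subseteq> {..<n}" "i < m" "l < m"
  shows "cg (Mw (u @ v) i l) (\<Sum>t<m. Mw u i t * Mw v t l)"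
  using assms
proof (induction u arbitrary: i)
  case Nil
  show ?case
  proof (cases v)
    case Nil
    have "(\<Sum>t<m. Xg (xe n i t) * Xg (xe n t l)) - Xg (xe n i l) \<in> RR"
      using \<open>i < m\<close> \<open>l < m\<close> by (rule RR_b1)
    then have "cg (\<Sum>t<m. Xg (xe n i t) * Xg (xe n t l)) (Xg (xe n i l))"
      using \<open>i < m\<close> \<open>l < m\<close> by (intro cg_rel) (auto intro!: Fn_sum Fn_mult)
    then show ?thesis using Nil by (simp add: cong_sym)
  next
    case (Cons j v')
    then have j: "j < n" and v': "set v' \<subseteq> {..<n}" using Nil.prems by auto
    have "(\<Sum>t<m. Mw [] i t * Mw v t l) = (\<Sum>s<m. (\<Sum>t<m. Xg (xe n i t) * Xg (xe j t s)) * Mw v' s l)"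
      using Cons by (simp add: sum_swap_mult)
    moreover have "cg (\<Sum>s<m. (\<Sum>t<m. Xg (xe n i t) * Xg (xe j t s)) * Mw v' s l) (\<Sum>s<m. Xg (xe j i s) * Mw v' s l)"
    proof (rule cong_sum, rule cong_mult)
      fix s assume s: "s \<in> {..<m}"
      have "(\<Sum>t<m. Xg (xe n i t) * Xg (xe j t s)) - Xg (xe j i s) \<in> RR"
        using \<open>i < m\<close> s j by (intro RR_b2) auto
      then show "cg (\<Sum>t<m. Xg (xe n i t) * Xg (xe j t s)) (Xg (xe j i s))"
        using \<open>i < m\<close> s j by (intro cg_rel) (auto intro!: Fn_sum Fn_mult)
      show "cg (Mw v' s l) (Mw v' s l)" using v' s \<open>l < m\<close> by (intro cg_refl Mw_F) auto
    qed
    ultimately show ?thesis using Cons by (simp add: cong_sym)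
  qed
next
  case (Cons j u')
  then have j: "j < n" and u': "set u' \<subseteq> {..<n}" by auto
  have "cg (\<Sum>t<m. Xg (xe j i t) * Mw (u' @ v) t l) (\<Sum>t<m. Xg (xe j i t) * (\<Sum>s<m. Mw u' t s * Mw v s l))"
  proof (rule cong_sum, rule cong_mult)
    fix t assume t: "t \<in> {..<m}"
    show "cg (Xg (xe j i t)) (Xg (xe j i t))" using j t Cons.prems by (intro cg_refl Xe_F) auto
    show "cg (Mw (u' @ v) t l) (\<Sum>s<m. Mw u' t s * Mw v s l)" using Cons.IH u' Cons.prems t by simp
  qed
  then show ?case by (simp add: sum_swap_mult)
qed

lemma Phi_mult:
  assumes p: "p \<in> free_alg_n n" and q: "q \<in> free_alg_n n" and il: "i < m" "l < m"
  shows "cg (Phi (p * q) i l) (\<Sum>t<m. Phi p i t * Phi q t l)"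
  using p
proof (induction p rule: fa_induct_F)
  case zero then show ?case by (simp only: mult_zero_left Phi_0 sum.neutral_const) (rule cg_refl, rule Fn_0)
next
  case (add a b)
  have e1: "Phi ((a + b) * q) i l = Phi (a * q) i l + Phi (b * q) i l" by (simp add: distrib_right Phi_add)
  have e2: "(\<Sum>t<m. Phi (a + b) i t * Phi q t l) = (\<Sum>t<m. Phi a i t * Phi q t l) + (\<Sum>t<m. Phi b i t * Phi q t l)"
    by (simp add: Phi_add distrib_right sum.distrib)
  show ?case unfolding e1 e2 by (rule cong_add[OF add(3) add(4)])
next
  case (single u c)
  show ?case using q
  proof (induction q rule: fa_induct_F)
    case zero then show ?case by (simp only: mult_zero_right Phi_0 sum.neutral_const) (rule cg_refl, rule Fn_0)
  next
    case (add a b)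
    have e1: "Phi (Poly_Mapping.single u c * (a + b)) i l = Phi (Poly_Mapping.single u c * a) i l + Phi (Poly_Mapping.single u c * b) i l"
      by (simp add: distrib_left Phi_add)
    have e2: "(\<Sum>t<m. Phi (Poly_Mapping.single u c) i t * Phi (a + b) t l) = (\<Sum>t<m. Phi (Poly_Mapping.single u c) i t * Phi a t l) + (\<Sum>t<m. Phi (Poly_Mapping.single u c) i t * Phi b t l)"
      by (simp add: Phi_add distrib_left sum.distrib)
    show ?case unfolding e1 e2 by (rule cong_add[OF add(3) add(4)])
  next
    case (single v c')
    have "Phi (Poly_Mapping.single u c * Poly_Mapping.single v c') i l = sc (c * c') * Mw (letters u @ letters v) i l"
      by (simp add: mult_single Phi_single)
    moreover have "cg (sc (c * c') * Mw (letters u @ letters v) i l) (sc (c * c') * (\<Sum>t<m. Mw (letters u) i t * Mw (letters v) t l))"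
      by (rule cong_mult, rule cong_refl, simp, rule Mw_append) (use il single.hyps \<open>set (letters u) \<subseteq> {..<n}\<close> in auto)
    moreover have "sc (c * c') * (\<Sum>t<m. Mw (letters u) i t * Mw (letters v) t l)
        = (\<Sum>t<m. Phi (Poly_Mapping.single u c) i t * Phi (Poly_Mapping.single v c') t l)"
      by (simp add: Phi_single sum_distrib_left sc_pull)
    ultimately show ?case by simp
  qed
qed

end

context comb begin

lemma Phi_kills:
  assumes x: "x \<in> fa_ideal_gen n R" and il: "i < m" "l < m"
  shows "cg (Phi x i l) 0"
proof -
  obtain mm :: nat and u r v where xx: "x = (\<Sum>j<mm. u j * r j * v j)"
    and h: "\<forall>j<mm. u j \<in> free_alg_n n \<and> r j \<in> R \<and> v j \<in> free_alg_n n"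
    using x unfolding J_iff by blast
  have t1: "cg (Phi (uu * rr) i t) 0" if "uu \<in> free_alg_n n" "rr \<in> R" "t < m" for uu rr t
  proof -
    have rF: "rr \<in> free_alg_n n" using that R_F by auto
    have c1: "cg (Phi (uu * rr) i t) (\<Sum>s<m. Phi uu i s * Phi rr s t)"
      using Phi_mult[OF that(1) rF il(1) that(3)] .
    have c2: "cg (\<Sum>s<m. Phi uu i s * Phi rr s t) (\<Sum>s<m. Phi uu i s * 0)"
    proof (rule cong_sum, rule cong_mult)
      fix s assume s: "s \<in> {..<m}"
      show "cg (Phi uu i s) (Phi uu i s)" using that il s by (intro cg_refl Phi_F) auto
      show "cg (Phi rr s t) 0" using that s by (intro cg_rel0 RR_a) auto
    qed
    have e: "(\<Sum>s<m. Phi uu i s * 0) = 0" by simp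
    show ?thesis using cong_trans[OF c1 c2[unfolded e]] .
  qed
  have t2: "cg (Phi (uu * rr * vv) i l) 0" if "uu \<in> free_alg_n n" "rr \<in> R" "vv \<in> free_alg_n n" for uu rr vv
  proof -
    have urF: "uu * rr \<in> free_alg_n n" using that R_F by (auto intro: Fn_mult)
    have c1: "cg (Phi (uu * rr * vv) i l) (\<Sum>t<m. Phi (uu * rr) i t * Phi vv t l)"
      using Phi_mult[OF urF that(3) il] .
    have c2: "cg (\<Sum>t<m. Phi (uu * rr) i t * Phi vv t l) (\<Sum>t<m. 0 * Phi vv t l)"
    proof (rule cong_sum, rule cong_mult)
      fix t assume t: "t \<in> {..<m}"
      show "cg (Phi (uu * rr) i t) 0" using t1 that t by auto
      show "cg (Phi vv t l) (Phi vv t l)" using that il t by (intro cg_refl Phi_F) auto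
    qed
    have e: "(\<Sum>t<m. 0 * Phi vv t l) = 0" by simp
    show ?thesis using cong_trans[OF c1 c2[unfolded e]] .
  qed
  have "cg (\<Sum>j<mm. Phi (u j * r j * v j) i l) (\<Sum>j<mm. 0)"
    by (rule cong_sum) (use t2 h in auto)
  then show ?thesis by (simp add: xx Phi_sum)
qed

lemma Xb_left_word:
  assumes w: "set w \<subseteq> {..<n}" and k: "k < m" and l: "l < m" and l': "l' < m"
  shows "cg (Xg (xb l) * Mw w k l') (Phi (\<beta> k * Poly_Mapping.single (Word w) 1) l l')"
proof (cases w)
  case Nil
  have e: "\<beta> k * Poly_Mapping.single (Word w) 1 = \<beta> k * xt n"
    using Nil by (simp add: xt_def zero_word_def[symmetric])
  have "Xg (xb l) * Xg (xe n k l') - Phi (\<beta> k * xt n) l l' \<in> RR"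
    using k l l' by (intro RR_f) auto
  then show ?thesis unfolding e using Nil k l l' \<beta>_F
    by (auto intro!: cg_rel Fn_mult Phi_F)
next
  case (Cons j w')
  then have j: "j < n" and w': "set w' \<subseteq> {..<n}" using w by auto
  have e1: "Xg (xb l) * Mw w k l' = (\<Sum>t<m. (Xg (xb l) * Xg (xe j k t)) * Mw w' t l')"
    using Cons by (simp add: sum_distrib_left mult.assoc)
  have c1: "cg (\<Sum>t<m. (Xg (xb l) * Xg (xe j k t)) * Mw w' t l') (\<Sum>t<m. Phi (\<beta> k * xt j) l t * Mw w' t l')"
  proof (rule cong_sum, rule cong_mult)
    fix t assume t: "t \<in> {..<m}"
    have "Xg (xb l) * Xg (xe j k t) - Phi (\<beta> k * xt j) l t \<in> RR"
      using k l t j by (intro RR_f) auto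
    then show "cg (Xg (xb l) * Xg (xe j k t)) (Phi (\<beta> k * xt j) l t)"
      using k l t j \<beta>_F by (auto intro!: cg_rel Fn_mult Phi_F)
    show "cg (Mw w' t l') (Mw w' t l')" using w' t l' by (intro cg_refl Mw_F) auto
  qed
  have e2: "\<beta> k * Poly_Mapping.single (Word w) 1 = (\<beta> k * xt j) * Poly_Mapping.single (Word w') 1"
    using Cons j by (simp add: single_Cons xt_def mult.assoc)
  have c2: "cg (Phi ((\<beta> k * xt j) * Poly_Mapping.single (Word w') 1) l l')
     (\<Sum>t<m. Phi (\<beta> k * xt j) l t * Phi (Poly_Mapping.single (Word w') 1) t l')"
    using w' \<beta>_F l l' by (intro Phi_mult) (auto intro!: Fn_mult Fn_single)
  have e3: "(\<Sum>t<m. Phi (\<beta> k * xt j) l t * Phi (Poly_Mapping.single (Word w') 1) t l')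
      = (\<Sum>t<m. Phi (\<beta> k * xt j) l t * Mw w' t l')"
    by (simp add: Phi_single)
  show ?thesis unfolding e1 e2 using cong_trans[OF c1 cong_sym[OF c2[unfolded e3]]] .
qed

lemma Xb_left:
  assumes q: "q \<in> free_alg_n n" and k: "k < m" and l: "l < m" and l': "l' < m"
  shows "cg (Xg (xb l) * Phi q k l') (Phi (\<beta> k * q) l l')"
  using q
proof (induction q rule: fa_induct_F)
  case zero then show ?case by (simp only: mult_zero_right Phi_0) (rule cg_refl, rule Fn_0)
next
  case (add a b)
  have e1: "Xg (xb l) * Phi (a + b) k l' = Xg (xb l) * Phi a k l' + Xg (xb l) * Phi b k l'"
    by (simp add: Phi_add distrib_left)
  have e2: "Phi (\<beta> k * (a + b)) l l' = Phi (\<beta> k * a) l l' + Phi (\<beta> k * b) l l'"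
    by (simp add: Phi_add distrib_left)
  show ?case unfolding e1 e2 by (rule cong_add[OF add(3) add(4)])
next
  case (single w c)
  have e1: "Xg (xb l) * Phi (Poly_Mapping.single w c) k l' = sc c * (Xg (xb l) * Mw (letters w) k l')"
  proof -
    have "Xg (xb l) * Phi (Poly_Mapping.single w c) k l' = (Xg (xb l) * sc c) * Mw (letters w) k l'"
      by (simp add: Phi_single mult.assoc)
    also have "\<dots> = (sc c * Xg (xb l)) * Mw (letters w) k l'"
      by (rule arg_cong[where f="\<lambda>z. z * _"], rule sc_comm)
    finally show ?thesis by (simp only: mult.assoc)
  qed
  have e2: "Phi (\<beta> k * Poly_Mapping.single w c) l l' = sc c * Phi (\<beta> k * Poly_Mapping.single (Word (letters w)) 1) l l'"
  proof -
    have "\<beta> k * Poly_Mapping.single w c = \<beta> k * (sc c * Poly_Mapping.single w 1)"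
      by (simp only: single_sc[of w c])
    also have "\<dots> = (\<beta> k * sc c) * Poly_Mapping.single w 1" by (simp only: mult.assoc)
    also have "\<dots> = (sc c * \<beta> k) * Poly_Mapping.single w 1"
      by (rule arg_cong[where f="\<lambda>z. z * _"], rule sc_comm)
    finally show ?thesis by (simp add: mult.assoc Phi_sc_mult)
  qed
  show ?case unfolding e1 e2
    by (rule cong_mult, rule cg_refl, rule Fn_sc, rule Xb_left_word) (use single k l l' in auto)
qed

end

lemma sum4_swap:
  fixes a :: "'i \<Rightarrow> 'j \<Rightarrow> 'k \<Rightarrow> 'r::semiring_0"
  shows "(\<Sum>i\<in>I. \<Sum>l\<in>L. (\<Sum>j\<in>J. \<Sum>k\<in>K. a i j k * b j k l) * x l)
       = (\<Sum>j\<in>J. \<Sum>k\<in>K. (\<Sum>i\<in>I. a i j k) * (\<Sum>l\<in>L. b j k l * x l))"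
proof -
  have "(\<Sum>i\<in>I. \<Sum>l\<in>L. (\<Sum>j\<in>J. \<Sum>k\<in>K. a i j k * b j k l) * x l)
      = (\<Sum>i\<in>I. \<Sum>l\<in>L. \<Sum>j\<in>J. \<Sum>k\<in>K. a i j k * (b j k l * x l))"
    by (simp add: sum_distrib_right mult.assoc)
  also have "\<dots> = (\<Sum>i\<in>I. \<Sum>j\<in>J. \<Sum>k\<in>K. \<Sum>l\<in>L. a i j k * (b j k l * x l))"
  proof (rule sum.cong[OF refl])
    fix i
    have "(\<Sum>l\<in>L. \<Sum>j\<in>J. \<Sum>k\<in>K. a i j k * (b j k l * x l)) = (\<Sum>j\<in>J. \<Sum>l\<in>L. \<Sum>k\<in>K. a i j k * (b j k l * x l))"
      by (rule sum.swap)
    also have "\<dots> = (\<Sum>j\<in>J. \<Sum>k\<in>K. \<Sum>l\<in>L. a i j k * (b j k l * x l))"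
      by (rule sum.cong[OF refl], rule sum.swap)
    finally show "(\<Sum>l\<in>L. \<Sum>j\<in>J. \<Sum>k\<in>K. a i j k * (b j k l * x l)) = (\<Sum>j\<in>J. \<Sum>k\<in>K. \<Sum>l\<in>L. a i j k * (b j k l * x l))" .
  qed
  also have "\<dots> = (\<Sum>j\<in>J. \<Sum>i\<in>I. \<Sum>k\<in>K. \<Sum>l\<in>L. a i j k * (b j k l * x l))"
    by (rule sum.swap)
  also have "\<dots> = (\<Sum>j\<in>J. \<Sum>k\<in>K. \<Sum>i\<in>I. \<Sum>l\<in>L. a i j k * (b j k l * x l))"
    by (rule sum.cong[OF refl], rule sum.swap)
  also have "\<dots> = (\<Sum>j\<in>J. \<Sum>k\<in>K. (\<Sum>i\<in>I. a i j k) * (\<Sum>l\<in>L. b j k l * x l))"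
    by (simp add: sum_distrib_left sum_distrib_right) (rule sum.cong[OF refl], rule sum.cong[OF refl], rule sum.swap)
  finally show ?thesis .
qed

context comb begin

definition Sq :: "(nat \<Rightarrow> 'k free_alg) \<Rightarrow> 'k free_alg" where
  "Sq q = (\<Sum>i<m. \<Sum>l<m. Phi (q i) i l * Xg (xb l))"

lemma Tm_Sq: "Tm c q = sc c + Sq q" by (simp add: Tm_def Sq_def)

lemma Sq_F: "(\<And>i. i < m \<Longrightarrow> q i \<in> free_alg_n n) \<Longrightarrow> Sq q \<in> free_alg_n NN"
  unfolding Sq_def by (intro Fn_sum Fn_mult Phi_F Xb_F) auto

lemma Tm_F: "(\<And>i. i < m \<Longrightarrow> q i \<in> free_alg_n n) \<Longrightarrow> Tm c q \<in> free_alg_n NN"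
  unfolding Tm_Sq by (intro Fn_add Fn_sc Sq_F) auto

lemma Sq_add: "Sq (\<lambda>i. a i + b i) = Sq a + Sq b"
  by (simp add: Sq_def Phi_add distrib_right sum.distrib)

lemma Tm_add: "Tm (c + c') (\<lambda>i. q i + q' i) = Tm c q + Tm c' q'"
  by (simp add: Tm_Sq Sq_add single_add add_ac)

lemma Sq_sc_left: "Sq (\<lambda>i. sc c * q i) = sc c * Sq q"
  by (simp add: Sq_def Phi_sc_mult sum_distrib_left mult.assoc)

lemma Sq_sc_right: "Sq (\<lambda>i. q i * sc c) = Sq q * sc c"
  by (simp add: sc_comm[of _ c] Sq_sc_left)

lemma ker_wd:
  assumes q: "\<And>i. i < m \<Longrightarrow> q i \<in> free_alg_n n" and cs: "\<And>j. cs j \<in> free_alg_n n"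
    and h: "\<And>i. i < m \<Longrightarrow> q i - (\<Sum>j<pp. relt j i * cs j) \<in> fa_ideal_gen n R"
  shows "cg (Sq q) 0"
proof -
  have s1: "cg (Phi (q i) i l) (\<Sum>j<pp. \<Sum>k<m. Phi (relt j i) i k * Phi (cs j) k l)" if il: "i < m" "l < m" for i l
  proof -
    let ?S = "\<Sum>j<pp. relt j i * cs j"
    have e: "Phi (q i) i l = Phi (q i - ?S) i l + (\<Sum>j<pp. Phi (relt j i * cs j) i l)"
      by (simp add: Phi_diff Phi_sum)
    have c1: "cg (Phi (q i - ?S) i l) 0" using Phi_kills h il by blast
    have c2: "cg (\<Sum>j<pp. Phi (relt j i * cs j) i l) (\<Sum>j<pp. \<Sum>k<m. Phi (relt j i) i k * Phi (cs j) k l)"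
      by (rule cong_sum, rule Phi_mult) (use relt_F cs il in auto)
    show ?thesis unfolding e using cong_add[OF c1 c2] by simp
  qed
  have c: "cg (Sq q) (\<Sum>i<m. \<Sum>l<m. (\<Sum>j<pp. \<Sum>k<m. Phi (relt j i) i k * Phi (cs j) k l) * Xg (xb l))"
    unfolding Sq_def
    by (rule cong_sum, rule cong_sum, rule cong_mult, rule s1) (auto intro: cg_refl Xb_F)
  have e: "(\<Sum>i<m. \<Sum>l<m. (\<Sum>j<pp. \<Sum>k<m. Phi (relt j i) i k * Phi (cs j) k l) * Xg (xb l))
     = (\<Sum>j<pp. \<Sum>k<m. (\<Sum>i<m. Phi (relt j i) i k) * (\<Sum>l<m. Phi (cs j) k l * Xg (xb l)))"
    by (rule sum4_swap)
  have c2: "cg (\<Sum>j<pp. \<Sum>k<m. (\<Sum>i<m. Phi (relt j i) i k) * (\<Sum>l<m. Phi (cs j) k l * Xg (xb l)))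
     (\<Sum>j<pp. \<Sum>k<m. 0 * (\<Sum>l<m. Phi (cs j) k l * Xg (xb l)))"
    by (rule cong_sum, rule cong_sum, rule cong_mult, rule cg_rel0, rule RR_e)
       (auto intro!: cg_refl Fn_sum Fn_mult Phi_F Xb_F cs)
  show ?thesis using cong_trans[OF c[unfolded e] c2] by simp
qed

lemma Sq_mult:
  assumes q: "\<And>i. i < m \<Longrightarrow> q i \<in> free_alg_n n" and q': "\<And>i. i < m \<Longrightarrow> q' i \<in> free_alg_n n"
  shows "cg (Sq q * Sq q') (Sq (\<lambda>i. q i * (\<Sum>k<m. \<beta> k * q' k)))"
proof -
  let ?Q = "\<Sum>k<m. \<beta> k * q' k"
  have QF: "?Q \<in> free_alg_n n" using q' \<beta>_F by (auto intro!: Fn_sum Fn_mult)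
  have xl: "cg (Xg (xb l) * Sq q') (\<Sum>l'<m. Phi ?Q l l' * Xg (xb l'))" if l: "l < m" for l
  proof -
    have e1: "Xg (xb l) * Sq q' = (\<Sum>k<m. \<Sum>l'<m. (Xg (xb l) * Phi (q' k) k l') * Xg (xb l'))"
      by (simp add: Sq_def sum_distrib_left mult.assoc)
    have c1: "cg (\<Sum>k<m. \<Sum>l'<m. (Xg (xb l) * Phi (q' k) k l') * Xg (xb l'))
                 (\<Sum>k<m. \<Sum>l'<m. Phi (\<beta> k * q' k) l l' * Xg (xb l'))"
      by (rule cong_sum, rule cong_sum, rule cong_mult, rule Xb_left) (use l q' in \<open>auto intro: cg_refl Xb_F\<close>)
    have e2: "(\<Sum>k<m. \<Sum>l'<m. Phi (\<beta> k * q' k) l l' * Xg (xb l')) = (\<Sum>l'<m. Phi ?Q l l' * Xg (xb l'))"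
      by (simp add: Phi_sum sum_distrib_right) (rule sum.swap)
    show ?thesis unfolding e1 using c1[unfolded e2] .
  qed
  have e1: "Sq q * Sq q' = (\<Sum>i<m. \<Sum>l<m. Phi (q i) i l * (Xg (xb l) * Sq q'))"
    by (simp add: Sq_def sum_distrib_right mult.assoc)
  have c1: "cg (\<Sum>i<m. \<Sum>l<m. Phi (q i) i l * (Xg (xb l) * Sq q'))
               (\<Sum>i<m. \<Sum>l<m. Phi (q i) i l * (\<Sum>l'<m. Phi ?Q l l' * Xg (xb l')))"
    by (rule cong_sum, rule cong_sum, rule cong_mult, rule cg_refl, rule Phi_F) (use q xl in auto)
  have e2: "(\<Sum>i<m. \<Sum>l<m. Phi (q i) i l * (\<Sum>l'<m. Phi ?Q l l' * Xg (xb l')))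
      = (\<Sum>i<m. \<Sum>l'<m. (\<Sum>l<m. Phi (q i) i l * Phi ?Q l l') * Xg (xb l'))"
    by (rule sum.cong[OF refl], rule sum_swap_mult)
  have c2: "cg (\<Sum>i<m. \<Sum>l'<m. (\<Sum>l<m. Phi (q i) i l * Phi ?Q l l') * Xg (xb l'))
               (\<Sum>i<m. \<Sum>l'<m. Phi (q i * ?Q) i l' * Xg (xb l'))"
    by (rule cong_sum, rule cong_sum, rule cong_mult, rule cong_sym, rule Phi_mult)
       (use q QF in \<open>auto intro: cg_refl Xb_F\<close>)
  have "cg (Sq q * Sq q') (\<Sum>i<m. \<Sum>l'<m. Phi (q i * ?Q) i l' * Xg (xb l'))"
    unfolding e1 by (rule cong_trans[OF c1[unfolded e2] c2])
  then show ?thesis by (simp only: Sq_def)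
qed

lemma Tm_mult:
  assumes q: "\<And>i. i < m \<Longrightarrow> q i \<in> free_alg_n n" and q': "\<And>i. i < m \<Longrightarrow> q' i \<in> free_alg_n n"
  shows "cg (Tm c q * Tm c' q') (Tm (c * c') (\<lambda>i. q i * sc c' + sc c * q' i + q i * (\<Sum>k<m. \<beta> k * q' k)))"
proof -
  let ?Q = "\<Sum>k<m. \<beta> k * q' k"
  have e1: "Tm c q * Tm c' q' = sc (c * c') + (sc c * Sq q' + Sq q * sc c') + Sq q * Sq q'"
    by (simp add: Tm_Sq distrib_left distrib_right sc_mult add_ac)
  have e2: "Tm (c * c') (\<lambda>i. q i * sc c' + sc c * q' i + q i * ?Q) = sc (c * c') + (sc c * Sq q' + Sq q * sc c') + Sq (\<lambda>i. q i * ?Q)"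
    by (simp add: Tm_Sq Sq_add Sq_sc_left Sq_sc_right add_ac)
  have F1: "sc (c * c') + (sc c * Sq q' + Sq q * sc c') \<in> free_alg_n NN"
    using q q' by (intro Fn_add Fn_mult Fn_sc Sq_F) auto
  show ?thesis unfolding e1 e2
    by (rule cong_add[OF cong_refl[OF F1] Sq_mult[OF q q']])
qed

lemma gen_e:
  assumes j: "j \<le> n" and i: "i < m" and l: "l < m"
  shows "cg (Tm 0 (\<lambda>k. if k = i then xt j * \<delta> l else 0)) (Xg (xe j i l))"
proof -
  have "Tm 0 (\<lambda>k. if k = i then xt j * \<delta> l else 0) = (\<Sum>k<m. if k = i then (\<Sum>l'<m. Phi (xt j * \<delta> l) k l' * Xg (xb l')) else 0)"
    unfolding Tm_def single_zero add_0_left by (intro sum.cong) auto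
  also have "\<dots> = (\<Sum>l'<m. Phi (xt j * \<delta> l) i l' * Xg (xb l'))"
    using i by (simp add: sum.delta')
  finally have e: "Tm 0 (\<lambda>k. if k = i then xt j * \<delta> l else 0) = (\<Sum>l'<m. Phi (xt j * \<delta> l) i l' * Xg (xb l'))" .
  have "cg (Xg (xe j i l)) (\<Sum>l'<m. Phi (xt j * \<delta> l) i l' * Xg (xb l'))"
    using j i l \<delta>_F by (intro cg_rel RR_c) (auto intro!: Fn_sum Fn_mult Phi_F Xb_F Xe_F)
  then show ?thesis unfolding e by (rule cong_sym)
qed

lemma gen_b:
  assumes l: "l < m"
  shows "cg (Tm 0 (\<lambda>k. if k = l then 1 else 0)) (Xg (xb l))"
proof -
  have "Tm 0 (\<lambda>k. if k = l then 1 else 0) = (\<Sum>k<m. if k = l then (\<Sum>l'<m. Phi 1 k l' * Xg (xb l')) else 0)"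
    unfolding Tm_def single_zero add_0_left by (intro sum.cong) auto
  also have "\<dots> = (\<Sum>l'<m. Phi 1 l l' * Xg (xb l'))"
    using l by (simp add: sum.delta')
  finally have e: "Tm 0 (\<lambda>k. if k = l then 1 else 0) = (\<Sum>l'<m. Phi 1 l l' * Xg (xb l'))" .
  have "cg (Xg (xb l)) (\<Sum>l'<m. Phi 1 l l' * Xg (xb l'))"
    using l by (intro cg_rel RR_d) (auto intro!: Fn_sum Fn_mult Phi_F Xb_F)
  then show ?thesis unfolding e by (rule cong_sym)
qed

end

lemma sum_mid:
  fixes x y :: "'a::ring_1"
  shows "(\<Sum>t\<in>S. (x * d t) * (b t * y)) = x * (\<Sum>t\<in>S. d t * b t) * y"
  by (simp add: sum_distrib_left sum_distrib_right mult.assoc)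

locale evl = comb n m pp R \<delta> \<beta> relt
  for n m pp :: nat and R :: "'k::field free_alg set" and \<delta> \<beta> relt +
  fixes \<phi> :: "'k \<Rightarrow> 'a::ring_1" and g0 b d :: "nat \<Rightarrow> 'a" and rel :: "nat \<Rightarrow> nat \<Rightarrow> 'a" and I :: "'a set"
  assumes kalg: "k_algebra \<phi>"
    and ker0: "{p \<in> free_alg_n n. fa_eval \<phi> g0 p = 0} = fa_ideal_gen n R"
    and \<delta>_ev: "\<And>l. fa_eval \<phi> g0 (\<delta> l) = d l"
    and \<beta>_ev: "\<And>k. fa_eval \<phi> g0 (\<beta> k) = b k"
    and relt_ev: "\<And>j i. fa_eval \<phi> g0 (relt j i) = rel j i"
    and surj: "\<And>x. \<exists>p\<in>free_alg_n n. fa_eval \<phi> g0 p = x"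
    and bI: "\<And>i. i < m \<Longrightarrow> b i \<in> I"
    and Ieq: "I = {(\<Sum>i<m. b i * a i) | a. True}"
    and K1: "\<And>j. j < pp \<Longrightarrow> (\<Sum>i<m. b i * rel j i) = 0"
    and K2: "\<And>a. (\<Sum>i<m. b i * a i) = 0 \<Longrightarrow> \<exists>c. \<forall>i<m. a i = (\<Sum>j<pp. rel j i * c j)"
    and db: "(\<Sum>l<m. d l * b l) = 1"
    and rI: "right_ideal I"
    and notone: "1 \<notin> I"
begin

abbreviation ev0 where "ev0 \<equiv> fa_eval \<phi> g0"

definition ge :: "nat \<Rightarrow> 'a" where "ge j = (if j < n then g0 j else 1)"

definition gg :: "nat \<Rightarrow> 'a" where
  "gg t = (if t < Suc n * m * m then b (t div m mod m) * ge (t div m div m) * d (t mod m)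
           else b (t - Suc n * m * m))"

abbreviation ev where "ev \<equiv> fa_eval \<phi> gg"

lemma gg_xe: "i < m \<Longrightarrow> l < m \<Longrightarrow> j \<le> n \<Longrightarrow> gg (xe j i l) = b i * ge j * d l"
proof -
  assume a: "i < m" "l < m" "j \<le> n"
  have lt: "xe j i l < Suc n * m * m" using xe_lt'[OF a(3) a(1) a(2)] .
  have d1: "xe j i l div m = j * m + i" using a by (simp add: xe_def)
  have d2: "(j * m + i) div m = j" "(j * m + i) mod m = i" using a by simp_all
  have d3: "xe j i l mod m = l" using a by (simp add: xe_def)
  show ?thesis using lt a(1) by (simp add: gg_def d1 d2 d3)
qed

lemma gg_xb: "gg (xb l) = b l" by (simp add: gg_def xb_def)

lemma ev_X: "ev (Xg t) = gg t" by (rule fa_eval_X[OF kalg])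

lemma ev0_xt: "ev0 (xt j) = ge j"
  by (simp add: xt_def ge_def fa_eval_X[OF kalg] fa_eval_1[OF kalg])

lemma ev_Mw: "set w \<subseteq> {..<n} \<Longrightarrow> i < m \<Longrightarrow> l < m \<Longrightarrow> ev (Mw w i l) = b i * prod_list (map g0 w) * d l"
proof (induction w arbitrary: i)
  case Nil then show ?case by (simp add: ev_X gg_xe ge_def)
next
  case (Cons j w)
  have "ev (Mw (j # w) i l) = (\<Sum>t<m. (b i * g0 j) * d t * (b t * prod_list (map g0 w) * d l))"
    using Cons by (simp add: fa_eval_sum[OF kalg] fa_eval_mult[OF kalg] ev_X gg_xe ge_def)
  also have "\<dots> = (b i * g0 j) * (\<Sum>t<m. d t * b t) * (prod_list (map g0 w) * d l)"
    by (simp add: sum_distrib_left sum_distrib_right mult.assoc)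
  finally show ?case by (simp add: db mult.assoc)
qed

lemma ev_Phi: "p \<in> free_alg_n n \<Longrightarrow> i < m \<Longrightarrow> l < m \<Longrightarrow> ev (Phi p i l) = b i * ev0 p * d l"
proof -
  assume a: "p \<in> free_alg_n n" "i < m" "l < m"
  have "ev (Phi p i l) = (\<Sum>w\<in>Poly_Mapping.keys p. \<phi> (Poly_Mapping.lookup p w) * (b i * prod_list (map g0 (letters w)) * d l))"
    unfolding Phi_def fa_eval_sum[OF kalg] fa_eval_mult[OF kalg] fa_eval_sc[OF kalg]
  proof (rule sum.cong[OF refl])
    fix w assume "w \<in> Poly_Mapping.keys p"
    then have "set (letters w) \<subseteq> {..<n}" using a(1) by (auto simp: free_alg_n_def)
    then show "\<phi> (Poly_Mapping.lookup p w) * ev (Mw (letters w) i l) = \<phi> (Poly_Mapping.lookup p w) * (b i * prod_list (map g0 (letters w)) * d l)"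
      using a by (simp add: ev_Mw)
  qed
  also have "\<dots> = (\<Sum>w\<in>Poly_Mapping.keys p. b i * (\<phi> (Poly_Mapping.lookup p w) * prod_list (map g0 (letters w))) * d l)"
  proof (rule sum.cong[OF refl])
    fix w
    have "\<phi> (Poly_Mapping.lookup p w) * b i = b i * \<phi> (Poly_Mapping.lookup p w)" by (rule phi_central[OF kalg])
    then show "\<phi> (Poly_Mapping.lookup p w) * (b i * prod_list (map g0 (letters w)) * d l) = b i * (\<phi> (Poly_Mapping.lookup p w) * prod_list (map g0 (letters w))) * d l"
      by (simp only: mult.assoc[symmetric])
  qed
  also have "\<dots> = b i * ev0 p * d l"
    by (simp add: fa_eval_def sum_distrib_left sum_distrib_right)
  finally show ?thesis .
qed

end

lemma central_prod_expand:
  fixes u v :: "'a::ring_1"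
  assumes cu: "\<And>z. u * z = z * u" and cv: "\<And>z. v * z = z * v"
  shows "(u + (\<Sum>i<m. b i * a i)) * (v + (\<Sum>i<m. b i * a' i))
       = u * v + (\<Sum>i<m. b i * (a i * v + u * a' i + a i * (\<Sum>k<m. b k * a' k)))"
proof -
  let ?X = "\<Sum>i<m. b i * a i" and ?Y = "\<Sum>i<m. b i * a' i"
  have e1: "(\<Sum>i<m. b i * (a i * v)) = ?X * v" by (simp add: sum_distrib_right mult.assoc)
  have e2: "(\<Sum>i<m. b i * (u * a' i)) = u * ?Y"
  proof -
    have "(\<Sum>i<m. b i * (u * a' i)) = (\<Sum>i<m. u * (b i * a' i))"
    proof (rule sum.cong[OF refl])
      fix i
      have "b i * (u * a' i) = (b i * u) * a' i" by (simp only: mult.assoc)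
      also have "\<dots> = (u * b i) * a' i" by (simp only: cu)
      finally show "b i * (u * a' i) = u * (b i * a' i)" by (simp only: mult.assoc)
    qed
    then show ?thesis by (simp add: sum_distrib_left)
  qed
  have e3: "(\<Sum>i<m. b i * (a i * ?Y)) = ?X * ?Y" by (simp add: sum_distrib_right mult.assoc)
  have "(\<Sum>i<m. b i * (a i * v + u * a' i + a i * ?Y)) = ?X * v + u * ?Y + ?X * ?Y"
    by (simp add: distrib_left sum.distrib e1 e2 e3)
  moreover have "(u + ?X) * (v + ?Y) = u * v + u * ?Y + ?X * v + ?X * ?Y"
    by (simp add: distrib_left distrib_right add_ac)
  ultimately show ?thesis by (simp add: add_ac)
qed

context evl begin

lemma phi_diff: "\<phi> (x - y) = \<phi> x - \<phi> y"
  using phi_add[OF kalg, of x "-y"] phi_uminus[OF kalg, of y] by simp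

lemma ev0_zero_R: "r \<in> R \<Longrightarrow> ev0 r = 0"
  using ker0 J_gen[of r R n] by blast

lemma ev_RR: "r \<in> RR \<Longrightarrow> ev r = 0"
proof -
  note evs = fa_eval_diff[OF kalg] fa_eval_sum[OF kalg] fa_eval_mult[OF kalg] ev_X fa_eval_1[OF kalg]
  have sm: "(\<Sum>t<m. (x * d t) * (b t * y)) = x * y" for x y
    using sum_mid[of x d b y "{..<m}"] db by simp
  have sm1: "(\<Sum>t<m. (x * d t) * b t) = x" for x
    using sm[of x 1] by simp
  assume r: "r \<in> RR"
  show ?thesis using r unfolding RR_def
  proof (elim UnE imageE; clarify)
    fix rr i l assume a: "rr \<in> R" "i < m" "l < m"
    then show "ev (Phi rr i l) = 0" using R_F by (auto simp: ev_Phi ev0_zero_R)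
  next
    fix i l assume a: "i < m" "l < m"
    show "ev ((\<Sum>t<m. Xg (xe n i t) * Xg (xe n t l)) - Xg (xe n i l)) = 0"
      using a sm[of "b i" "d l"] by (simp add: evs gg_xe ge_def)
  next
    fix j i l assume a: "j < n" "i < m" "l < m"
    show "ev ((\<Sum>t<m. Xg (xe n i t) * Xg (xe j t l)) - Xg (xe j i l)) = 0"
      using a sm[of "b i" "g0 j * d l"] by (simp add: evs gg_xe ge_def mult.assoc)
  next
    fix j i l assume a: "j \<le> n" "i < m" "l < m"
    have xF: "xt j * \<delta> l \<in> free_alg_n n" using \<delta>_F xt_F by (rule Fn_mult[rotated])
    have "ev (\<Sum>l'<m. Phi (xt j * \<delta> l) i l' * Xg (xb l')) = (\<Sum>l'<m. (b i * (ge j * d l) * d l') * b l')"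
      using a xF by (simp add: evs ev_Phi gg_xb fa_eval_mult[OF kalg] ev0_xt \<delta>_ev)
    then show "ev (Xg (xe j i l) - (\<Sum>l'<m. Phi (xt j * \<delta> l) i l' * Xg (xb l'))) = 0"
      using a sm1[of "b i * (ge j * d l)"] by (simp add: evs gg_xe mult.assoc)
  next
    fix l assume a: "l < m"
    have "ev (\<Sum>l'<m. Phi 1 l l' * Xg (xb l')) = (\<Sum>l'<m. (b l * d l') * b l')"
      using a by (simp add: evs ev_Phi gg_xb)
    then show "ev (Xg (xb l) - (\<Sum>l'<m. Phi 1 l l' * Xg (xb l'))) = 0"
      using a sm1[of "b l"] by (simp add: evs gg_xb)
  next
    fix j k assume a: "j < pp" "k < m"
    have "ev (\<Sum>i<m. Phi (relt j i) i k) = (\<Sum>i<m. b i * rel j i) * d k"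
      using a relt_F by (simp add: evs ev_Phi relt_ev sum_distrib_right)
    then show "ev (\<Sum>i<m. Phi (relt j i) i k) = 0" using K1 a by simp
  next
    fix j k l l' assume a: "j \<le> n" "k < m" "l < m" "l' < m"
    show "ev (Xg (xb l) * Xg (xe j k l') - Phi (\<beta> k * xt j) l l') = 0"
    proof -
      have xF: "\<beta> k * xt j \<in> free_alg_n n" using \<beta>_F xt_F by (rule Fn_mult)
      show ?thesis using a xF by (simp add: evs ev_Phi gg_xb gg_xe \<beta>_ev ev0_xt mult.assoc)
    qed
  qed
qed

end

context evl begin

definition BB :: "'a set" where "BB = {\<phi> c + x | c x. x \<in> I}"

definition repr :: "'a \<Rightarrow> 'k \<Rightarrow> (nat \<Rightarrow> 'k free_alg) \<Rightarrow> bool" where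
  "repr y c q \<longleftrightarrow> (\<forall>i<m. q i \<in> free_alg_n n) \<and> y = \<phi> c + (\<Sum>i<m. b i * ev0 (q i))"

definition pre :: "'a \<Rightarrow> 'k free_alg" where "pre x = (SOME p. p \<in> free_alg_n n \<and> ev0 p = x)"

lemma pre: "pre x \<in> free_alg_n n \<and> ev0 (pre x) = x"
  unfolding pre_def using surj[of x] by (rule someI2_bex) auto

definition rp :: "'a \<Rightarrow> 'k \<times> (nat \<Rightarrow> 'k free_alg)" where
  "rp y = (SOME cq. repr y (fst cq) (snd cq))"

definition s :: "'a \<Rightarrow> 'k free_alg" where "s y = Tm (fst (rp y)) (snd (rp y))"

lemma rp: "repr y c q \<Longrightarrow> repr y (fst (rp y)) (snd (rp y))"
  unfolding rp_def by (rule someI[where x="(c, q)"]) simp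

lemma I_iff: "x \<in> I \<longleftrightarrow> (\<exists>a. x = (\<Sum>i<m. b i * a i))"
  using Ieq by blast

lemma rI_mult: "x \<in> I \<Longrightarrow> x * a \<in> I" using rI by (simp add: right_ideal_def)
lemma rI_add: "x \<in> I \<Longrightarrow> y \<in> I \<Longrightarrow> x + y \<in> I" using rI by (simp add: right_ideal_def)

lemma repr_ex: "y \<in> BB \<Longrightarrow> \<exists>c q. repr y c q"
proof -
  assume "y \<in> BB"
  then obtain c x where y: "y = \<phi> c + x" and x: "x \<in> I" unfolding BB_def by blast
  then obtain a where "x = (\<Sum>i<m. b i * a i)" using I_iff by blast
  then have "repr y c (\<lambda>i. pre (a i))" using y pre by (simp add: repr_def)
  then show ?thesis by blast
qed

lemma repr_B: "repr y c q \<Longrightarrow> y \<in> BB"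
proof -
  assume "repr y c q"
  then have y: "y = \<phi> c + (\<Sum>i<m. b i * ev0 (q i))" by (simp add: repr_def)
  have "(\<Sum>i<m. b i * ev0 (q i)) \<in> I" unfolding I_iff by (rule exI[of _ "\<lambda>i. ev0 (q i)"]) simp
  then show ?thesis unfolding BB_def y by blast
qed

lemma Sq_diff: "Sq (\<lambda>i. a i - a' i) = Sq a - Sq a'"
  by (simp add: Sq_def Phi_diff left_diff_distrib sum_subtractf)

lemma WD:
  assumes r1: "repr y c q" and r2: "repr y c' q'"
  shows "cg (Tm c q) (Tm c' q')"
proof -
  have q: "\<And>i. i < m \<Longrightarrow> q i \<in> free_alg_n n" and q': "\<And>i. i < m \<Longrightarrow> q' i \<in> free_alg_n n"
    using r1 r2 by (auto simp: repr_def)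
  have eq: "\<phi> c + (\<Sum>i<m. b i * ev0 (q i)) = \<phi> c' + (\<Sum>i<m. b i * ev0 (q' i))"
    using r1 r2 by (simp add: repr_def)
  have cc: "c = c'"
  proof (rule ccontr)
    assume ne: "c \<noteq> c'"
    have "\<phi> (c - c') = (\<Sum>i<m. b i * (ev0 (q' i) - ev0 (q i)))"
      using eq by (simp add: phi_diff right_diff_distrib sum_subtractf algebra_simps)
    then have "\<phi> (c - c') \<in> I" unfolding I_iff by (intro exI[of _ "\<lambda>i. ev0 (q' i) - ev0 (q i)"])
    then have "\<phi> (c - c') * \<phi> (inverse (c - c')) \<in> I" by (rule rI_mult)
    then have "\<phi> 1 \<in> I" using ne by (simp add: phi_mult[OF kalg, symmetric])
    then show False using notone phi_1[OF kalg] by simp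
  qed
  have z: "(\<Sum>i<m. b i * ev0 (q i - q' i)) = 0"
    using eq cc by (simp add: fa_eval_diff[OF kalg] right_diff_distrib sum_subtractf)
  obtain cc where hc: "\<forall>i<m. ev0 (q i - q' i) = (\<Sum>j<pp. rel j i * cc j)"
    using K2[OF z] by blast
  define cs where "cs j = pre (cc j)" for j
  have csF: "\<And>j. cs j \<in> free_alg_n n" and csE: "\<And>j. ev0 (cs j) = cc j" using pre by (auto simp: cs_def)
  have h: "q i - q' i - (\<Sum>j<pp. relt j i * cs j) \<in> fa_ideal_gen n R" if i: "i < m" for i
  proof -
    have "ev0 (q i - q' i - (\<Sum>j<pp. relt j i * cs j)) = 0"
      using hc i by (simp add: fa_eval_diff[OF kalg] fa_eval_sum[OF kalg] fa_eval_mult[OF kalg] relt_ev csE)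
    moreover have "q i - q' i - (\<Sum>j<pp. relt j i * cs j) \<in> free_alg_n n"
      using q q' i csF relt_F by (intro Fn_diff Fn_sum Fn_mult) auto
    ultimately show ?thesis using ker0 by blast
  qed
  have "cg (Sq (\<lambda>i. q i - q' i)) 0"
    by (rule ker_wd[where cs=cs]) (use q q' csF h in auto)
  then have "Sq q - Sq q' \<in> fa_ideal_gen NN RR" by (simp add: Sq_diff cong_def)
  moreover have "Tm c q - Tm c' q' = Sq q - Sq q'" using cc by (simp add: Tm_Sq)
  ultimately show ?thesis using Tm_F q q' by (simp add: cong_def)
qed

lemma s_cong: "repr y c q \<Longrightarrow> cg (s y) (Tm c q)"
  unfolding s_def using rp WD by blast

lemma s_eq_cong: "repr y c q \<Longrightarrow> cg (Tm c q) p \<Longrightarrow> cg (s y) p"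
  using s_cong cong_trans by blast

end

context evl begin

lemma rp_repr: "y \<in> BB \<Longrightarrow> repr y (fst (rp y)) (snd (rp y))"
  using repr_ex rp by blast

lemma s_def2: "s y = Tm (fst (rp y)) (snd (rp y))" by (simp add: s_def)

lemma I0: "0 \<in> I" using rI by (simp add: right_ideal_def)

lemma B_sc: "\<phi> c \<in> BB" unfolding BB_def using I0 by force

lemma B_I: "x \<in> I \<Longrightarrow> x \<in> BB" unfolding BB_def using phi_0[OF kalg] by force

lemma phi_comm: "\<phi> c * z = z * \<phi> c" by (rule phi_central[OF kalg])

lemma B_add: "x \<in> BB \<Longrightarrow> y \<in> BB \<Longrightarrow> x + y \<in> BB"
proof -
  assume "x \<in> BB" "y \<in> BB"
  then obtain c c' u v where x: "x = \<phi> c + u" "u \<in> I" and y: "y = \<phi> c' + v" "v \<in> I"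
    unfolding BB_def by blast
  have "x + y = \<phi> (c + c') + (u + v)" using x y by (simp add: phi_add[OF kalg] add_ac)
  moreover have "u + v \<in> I" using x y rI_add by blast
  ultimately show ?thesis unfolding BB_def by blast
qed

lemma B_mul: "x \<in> BB \<Longrightarrow> y \<in> BB \<Longrightarrow> x * y \<in> BB"
proof -
  assume "x \<in> BB" "y \<in> BB"
  then obtain c c' u v where x: "x = \<phi> c + u" "u \<in> I" and y: "y = \<phi> c' + v" "v \<in> I"
    unfolding BB_def by blast
  have "x * y = \<phi> (c * c') + (v * \<phi> c + u * \<phi> c' + u * v)"
    using x y by (simp add: phi_mult[OF kalg] distrib_left distrib_right phi_comm[of c v] add_ac)
  moreover have "v * \<phi> c + u * \<phi> c' + u * v \<in> I"
    using x y by (intro rI_add rI_mult)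
  ultimately show ?thesis unfolding BB_def by blast
qed

lemma s_add: "x \<in> BB \<Longrightarrow> y \<in> BB \<Longrightarrow> cg (s (x + y)) (s x + s y)"
proof -
  assume xB: "x \<in> BB" and yB: "y \<in> BB"
  define cx qx cy qy where "cx = fst (rp x)" "qx = snd (rp x)" "cy = fst (rp y)" "qy = snd (rp y)"
  have rx: "repr x cx qx" and ry: "repr y cy qy" using rp_repr xB yB by (auto simp: cx_qx_cy_qy_def)
  have "repr (x + y) (cx + cy) (\<lambda>i. qx i + qy i)"
    using rx ry by (auto simp: repr_def fa_eval_add[OF kalg] phi_add[OF kalg] distrib_left sum.distrib add_ac intro: Fn_add)
  then have "cg (s (x + y)) (Tm (cx + cy) (\<lambda>i. qx i + qy i))" by (rule s_cong)
  then show ?thesis by (simp add: Tm_add s_def2 cx_qx_cy_qy_def)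
qed

lemma s_mul: "x \<in> BB \<Longrightarrow> y \<in> BB \<Longrightarrow> cg (s (x * y)) (s x * s y)"
proof -
  assume xB: "x \<in> BB" and yB: "y \<in> BB"
  define cx qx cy qy where "cx = fst (rp x)" "qx = snd (rp x)" "cy = fst (rp y)" "qy = snd (rp y)"
  have rx: "repr x cx qx" and ry: "repr y cy qy" using rp_repr xB yB by (auto simp: cx_qx_cy_qy_def)
  have qxF: "\<And>i. i < m \<Longrightarrow> qx i \<in> free_alg_n n" and qyF: "\<And>i. i < m \<Longrightarrow> qy i \<in> free_alg_n n"
    using rx ry by (auto simp: repr_def)
  define q2 where "q2 i = qx i * sc cy + sc cx * qy i + qx i * (\<Sum>k<m. \<beta> k * qy k)" for i
  have q2F: "\<And>i. i < m \<Longrightarrow> q2 i \<in> free_alg_n n"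
    unfolding q2_def using qxF qyF \<beta>_F by (intro Fn_add Fn_mult Fn_sc Fn_sum) auto
  have ev2: "ev0 (q2 i) = ev0 (qx i) * \<phi> cy + \<phi> cx * ev0 (qy i) + ev0 (qx i) * (\<Sum>k<m. b k * ev0 (qy k))" for i
    by (simp add: q2_def fa_eval_add[OF kalg] fa_eval_mult[OF kalg] fa_eval_sc[OF kalg] fa_eval_sum[OF kalg] \<beta>_ev)
  have "x * y = \<phi> (cx * cy) + (\<Sum>i<m. b i * ev0 (q2 i))"
  proof -
    have "x * y = (\<phi> cx + (\<Sum>i<m. b i * ev0 (qx i))) * (\<phi> cy + (\<Sum>i<m. b i * ev0 (qy i)))"
      using rx ry by (simp add: repr_def)
    also have "\<dots> = \<phi> cx * \<phi> cy + (\<Sum>i<m. b i * (ev0 (qx i) * \<phi> cy + \<phi> cx * ev0 (qy i) + ev0 (qx i) * (\<Sum>k<m. b k * ev0 (qy k))))"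
      by (rule central_prod_expand) (rule phi_comm)+
    finally show ?thesis by (simp add: ev2 phi_mult[OF kalg])
  qed
  then have "repr (x * y) (cx * cy) q2" using q2F by (simp add: repr_def)
  then have "cg (s (x * y)) (Tm (cx * cy) q2)" by (rule s_cong)
  moreover have "cg (Tm (cx * cy) q2) (s x * s y)"
    unfolding s_def2 cx_qx_cy_qy_def[symmetric] q2_def
    by (rule cong_sym, rule Tm_mult) (use qxF qyF in auto)
  ultimately show ?thesis by (rule cong_trans)
qed

lemma s_sc: "cg (s (\<phi> c)) (sc c)"
proof -
  have "repr (\<phi> c) c (\<lambda>_. 0)" by (simp add: repr_def fa_eval_0[OF kalg])
  then have "cg (s (\<phi> c)) (Tm c (\<lambda>_. 0))" by (rule s_cong)
  moreover have "Tm c (\<lambda>_. 0) = sc c" by (simp add: Tm_def)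
  ultimately show ?thesis by simp
qed

lemma decode:
  assumes t: "t < Suc n * m * m"
  shows "t div m div m \<le> n \<and> t div m mod m < m \<and> t mod m < m \<and> t = xe (t div m div m) (t div m mod m) (t mod m)"
proof -
  have mpos: "m > 0" using t by (cases m) auto
  have a: "t div m < Suc n * m" using t by (simp add: less_mult_imp_div_less)
  have b: "t div m div m < Suc n" using a by (simp add: less_mult_imp_div_less)
  have "t = (t div m div m * m + t div m mod m) * m + t mod m" by simp
  then show ?thesis using b mpos by (simp add: xe_def)
qed

lemma s_gen: "t < NN \<Longrightarrow> gg t \<in> BB \<and> cg (s (gg t)) (Xg t)"
proof -
  assume tN: "t < NN"
  show ?thesis
  proof (cases "t < Suc n * m * m")
    case True
    define j i l where "j = t div m div m" "i = t div m mod m" "l = t mod m"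
    have dj: "j \<le> n" "i < m" "l < m" "t = xe j i l" using decode[OF True] by (auto simp: j_i_l_def)
    have gt: "gg t = b i * (ge j * d l)" using dj gg_xe by (simp add: mult.assoc)
    have "(\<Sum>k<m. b k * ev0 (if k = i then xt j * \<delta> l else 0)) = (\<Sum>k<m. if k = i then b i * (ge j * d l) else 0)"
      by (rule sum.cong) (auto simp: fa_eval_mult[OF kalg] ev0_xt \<delta>_ev fa_eval_0[OF kalg])
    also have "\<dots> = b i * (ge j * d l)" using dj by (simp add: sum.delta')
    finally have "repr (gg t) 0 (\<lambda>k. if k = i then xt j * \<delta> l else 0)"
      using gt \<delta>_F xt_F by (auto simp: repr_def phi_0[OF kalg] intro: Fn_mult)
    then have "cg (s (gg t)) (Tm 0 (\<lambda>k. if k = i then xt j * \<delta> l else 0))" by (rule s_cong)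
    moreover have "cg (Tm 0 (\<lambda>k. if k = i then xt j * \<delta> l else 0)) (Xg t)"
      using gen_e dj by simp
    moreover have "gg t \<in> BB" unfolding gt using bI[OF dj(2)] by (intro B_I rI_mult)
    ultimately show ?thesis by (blast intro: cong_trans)
  next
    case False
    define l where "l = t - Suc n * m * m"
    have dl: "l < m" "t = xb l" using False tN by (auto simp: l_def NN_def xb_def)
    have gt: "gg t = b l" using dl gg_xb by simp
    have "(\<Sum>k<m. b k * ev0 (if k = l then 1 else 0)) = (\<Sum>k<m. if k = l then b l else 0)"
      by (rule sum.cong) (auto simp: fa_eval_1[OF kalg] fa_eval_0[OF kalg])
    also have "\<dots> = b l" using dl by (simp add: sum.delta')
    finally have "repr (gg t) 0 (\<lambda>k. if k = l then 1 else 0)"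
      using gt by (auto simp: repr_def phi_0[OF kalg])
    then have "cg (s (gg t)) (Tm 0 (\<lambda>k. if k = l then 1 else 0))" by (rule s_cong)
    moreover have "cg (Tm 0 (\<lambda>k. if k = l then 1 else 0)) (Xg t)"
      using gen_b dl by simp
    moreover have "gg t \<in> BB" using gt bI dl by (intro B_I) auto
    ultimately show ?thesis by (blast intro: cong_trans)
  qed
qed

lemma fp_BB: "fp_algebra \<phi> BB"
  unfolding fp_algebra_def
proof (intro exI conjI)
  have sec: "fa_eval \<phi> gg p \<in> BB \<and> cg p (s (fa_eval \<phi> gg p))" if "p \<in> free_alg_n NN" for p
    by (rule section_kernel[OF kalg, where s=s and B=BB])
       (use that s_gen B_add B_mul B_sc s_add s_mul s_sc in auto)
  show "\<forall>t<NN. gg t \<in> BB" using s_gen by blast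
  show "BB = ev ` free_alg_n NN"
  proof
    show "ev ` free_alg_n NN \<subseteq> BB" using sec by blast
    show "BB \<subseteq> ev ` free_alg_n NN"
    proof
      fix y assume "y \<in> BB"
      then obtain c q where r: "repr y c q" using repr_ex by blast
      then have qF: "\<And>i. i < m \<Longrightarrow> q i \<in> free_alg_n n" by (simp add: repr_def)
      have "ev (Tm c q) = \<phi> c + (\<Sum>i<m. \<Sum>l<m. (b i * ev0 (q i) * d l) * b l)"
        using qF by (simp add: Tm_def fa_eval_add[OF kalg] fa_eval_sum[OF kalg] fa_eval_mult[OF kalg]
            fa_eval_sc[OF kalg] ev_X gg_xb ev_Phi)
      also have "\<dots> = \<phi> c + (\<Sum>i<m. b i * ev0 (q i))"
        using sum_mid[of _ d b 1 "{..<m}"] db by simp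
      also have "\<dots> = y" using r by (simp add: repr_def)
      finally show "y \<in> ev ` free_alg_n NN" using Tm_F qF by (metis image_eqI)
    qed
  qed
  show "finite RR" by (rule RR_fin)
  show "RR \<subseteq> free_alg_n NN" by (rule RR_F)
  show "{p \<in> free_alg_n NN. ev p = 0} = fa_ideal_gen NN RR"
  proof
    show "fa_ideal_gen NN RR \<subseteq> {p \<in> free_alg_n NN. ev p = 0}"
      using J_eval[OF kalg, of RR gg] ev_RR J_sub[OF RR_F] by blast
    show "{p \<in> free_alg_n NN. ev p = 0} \<subseteq> fa_ideal_gen NN RR"
    proof
      fix p assume "p \<in> {p \<in> free_alg_n NN. ev p = 0}"
      then have p: "p \<in> free_alg_n NN" "ev p = 0" by auto
      have "cg p (s 0)" using sec[OF p(1)] p(2) by simp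
      moreover have "cg (s 0) 0" using s_sc[of 0] phi_0[OF kalg] by simp
      ultimately have "cg p 0" by (rule cong_trans)
      then show "p \<in> fa_ideal_gen NN RR" by (simp add: cong_def)
    qed
  qed
qed

end

lemma sum_split_add: "(\<Sum>l<m0 + (M::nat). f l) = (\<Sum>l<m0. f l) + (\<Sum>k<M. f (m0 + k))"
  by (induction M arbitrary: f) (simp_all add: add_ac)

lemma ri_sum: "right_ideal I \<Longrightarrow> (\<And>k. k \<in> S \<Longrightarrow> f k \<in> I) \<Longrightarrow> sum f S \<in> I"
proof (induction S rule: infinite_finite_induct)
  case (infinite A) then show ?case by (simp add: right_ideal_def)
next
  case empty then show ?case by (simp add: right_ideal_def)
next
  case (insert x F) then show ?case by (simp add: right_ideal_def)
qed

lemma normalize: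
  fixes I :: "'a::ring_1 set"
  assumes rI: "right_ideal I" and fp: "fp_right_ideal I" and ls: "left_span I = UNIV"
  shows "\<exists>(m::nat) b (pp::nat) rel d. (\<forall>i<m. b i \<in> I) \<and> I = {(\<Sum>i<m. b i * a i) | a. True}
     \<and> (\<forall>j<pp. (\<Sum>i<m. b i * rel j i) = 0)
     \<and> (\<forall>a. (\<Sum>i<m. b i * a i) = 0 \<longrightarrow> (\<exists>c. \<forall>i<m. a i = (\<Sum>j<pp. rel j i * c j)))
     \<and> (\<Sum>l<m. d l * b l) = 1"
proof -
  obtain m0 and b0 :: "nat \<Rightarrow> 'a" where b0I: "\<forall>i<m0. b0 i \<in> I" and I0: "I = {(\<Sum>i<m0. b0 i * a i) | a. True}"
    and ex: "\<exists>(mr::nat) (rel0 :: nat \<Rightarrow> nat \<Rightarrow> 'a). (\<forall>j<mr. \<forall>i\<ge>m0. rel0 j i = 0)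
         \<and> {a. (\<forall>i\<ge>m0. a i = 0) \<and> (\<Sum>i<m0. b0 i * a i) = 0}
           = {(\<lambda>i. \<Sum>j<mr. rel0 j i * c j) | c. True}"
    using fp unfolding fp_right_ideal_def by blast
  then obtain mr :: nat and rel0 :: "nat \<Rightarrow> nat \<Rightarrow> 'a" where
    rz: "\<forall>j<mr. \<forall>i\<ge>m0. rel0 j i = 0" and keq: "{a. (\<forall>i\<ge>m0. a i = 0) \<and> (\<Sum>i<m0. b0 i * a i) = 0}
           = {(\<lambda>i. \<Sum>j<mr. rel0 j i * c j) | c. True}" by blast
  have K10: "(\<Sum>i<m0. b0 i * rel0 j i) = 0" if j: "j < mr" for j
  proof -
    have "(\<lambda>i. \<Sum>j'<mr. rel0 j' i * (if j' = j then 1 else 0)) \<in> {(\<lambda>i. \<Sum>j<mr. rel0 j i * c j) | c. True}"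
      by (rule CollectI, rule exI[of _ "\<lambda>j'. if j' = j then 1 else 0"]) simp
    moreover have "(\<lambda>i. \<Sum>j'<mr. rel0 j' i * (if j' = j then 1 else 0)) = rel0 j"
      using j by (simp add: if_distrib sum.delta' cong: if_cong)
    ultimately have "rel0 j \<in> {a. (\<forall>i\<ge>m0. a i = 0) \<and> (\<Sum>i<m0. b0 i * a i) = 0}" using keq by simp
    then show ?thesis by simp
  qed
  have K20: "\<exists>c. \<forall>i<m0. a i = (\<Sum>j<mr. rel0 j i * c j)" if z: "(\<Sum>i<m0. b0 i * a i) = 0" for a
  proof -
    let ?a = "\<lambda>i. if i < m0 then a i else 0"
    have "(\<Sum>i<m0. b0 i * ?a i) = 0" using z by simp
    then have "?a \<in> {a. (\<forall>i\<ge>m0. a i = 0) \<and> (\<Sum>i<m0. b0 i * a i) = 0}" by simp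
    then obtain c where "?a = (\<lambda>i. \<Sum>j<mr. rel0 j i * c j)" using keq by blast
    then have "\<forall>i<m0. a i = (\<Sum>j<mr. rel0 j i * c j)" by (metis (mono_tags, lifting))
    then show ?thesis by blast
  qed
  have "(1::'a) \<in> left_span I" using ls by simp
  then obtain M :: nat and aa x where one: "1 = (\<Sum>k<M. aa k * x k)" and xI: "\<forall>k<M. x k \<in> I"
    unfolding left_span_def by blast
  have "\<forall>k. \<exists>c. k < M \<longrightarrow> x k = (\<Sum>i<m0. b0 i * c i)" using xI I0 by blast
  then obtain cc where cc: "\<And>k. k < M \<Longrightarrow> x k = (\<Sum>i<m0. b0 i * cc k i)" by metis
  define m where "m = m0 + M"
  define b where "b l = (if l < m0 then b0 l else x (l - m0))" for l
  define pp where "pp = mr + M"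
  define rel where "rel j i = (if j < mr then (if i < m0 then rel0 j i else 0)
      else (if i < m0 then cc (j - mr) i else if i = m0 + (j - mr) then -1 else 0))" for j i
  define d where "d l = (if l < m0 then 0 else aa (l - m0))" for l
  have split: "(\<Sum>l<m. b l * a l) = (\<Sum>i<m0. b0 i * a i) + (\<Sum>k<M. x k * a (m0 + k))" for a
    unfolding m_def sum_split_add by (simp add: b_def)
  have xsum: "(\<Sum>k<M. x k * a (m0 + k)) = (\<Sum>i<m0. b0 i * (\<Sum>k<M. cc k i * a (m0 + k)))" for a
  proof -
    have "(\<Sum>k<M. x k * a (m0 + k)) = (\<Sum>k<M. \<Sum>i<m0. b0 i * (cc k i * a (m0 + k)))"
      by (rule sum.cong[OF refl]) (simp add: cc sum_distrib_right mult.assoc)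
    also have "\<dots> = (\<Sum>i<m0. b0 i * (\<Sum>k<M. cc k i * a (m0 + k)))"
      by (subst sum.swap) (simp add: sum_distrib_left)
    finally show ?thesis .
  qed
  have c1: "\<forall>i<m. b i \<in> I" using b0I xI by (auto simp: b_def m_def)
  have c2: "I = {(\<Sum>i<m. b i * a i) | a. True}"
  proof
    show "I \<subseteq> {(\<Sum>i<m. b i * a i) | a. True}"
    proof
      fix y assume "y \<in> I"
      then obtain a where y: "y = (\<Sum>i<m0. b0 i * a i)" using I0 by blast
      have "(\<Sum>i<m. b i * (if i < m0 then a i else 0)) = y" by (simp add: split y)
      then show "y \<in> {(\<Sum>i<m. b i * a i) | a. True}"
        by (intro CollectI exI[of _ "\<lambda>i. if i < m0 then a i else 0"]) simp
    qed
    show "{(\<Sum>i<m. b i * a i) | a. True} \<subseteq> I"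
    proof
      fix y assume "y \<in> {(\<Sum>i<m. b i * a i) | a. True}"
      then obtain a where y: "y = (\<Sum>i<m. b i * a i)" by blast
      have "y \<in> I" unfolding y using c1 rI
        by (intro ri_sum[OF rI]) (auto simp: right_ideal_def)
      then show "y \<in> I" .
    qed
  qed
  have c3: "\<forall>j<pp. (\<Sum>i<m. b i * rel j i) = 0"
  proof (intro allI impI)
    fix j assume j: "j < pp"
    show "(\<Sum>i<m. b i * rel j i) = 0"
    proof (cases "j < mr")
      case True
      then show ?thesis using K10[OF True] by (simp add: split rel_def)
    next
      case False
      define k0 where "k0 = j - mr"
      have k0: "k0 < M" "j = mr + k0" using j False by (auto simp: k0_def pp_def)
      have "(\<Sum>k<M. x k * rel j (m0 + k)) = (\<Sum>k<M. if k = k0 then - x k0 else 0)"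
        by (rule sum.cong[OF refl]) (auto simp: rel_def k0)
      also have "\<dots> = - x k0" using k0 by (simp add: sum.delta')
      finally show ?thesis using False by (simp add: split rel_def k0_def[symmetric] cc[OF k0(1)])
    qed
  qed
  have c4: "\<forall>a. (\<Sum>i<m. b i * a i) = 0 \<longrightarrow> (\<exists>c. \<forall>i<m. a i = (\<Sum>j<pp. rel j i * c j))"
  proof (intro allI impI)
    fix a assume z: "(\<Sum>i<m. b i * a i) = 0"
    have "(\<Sum>i<m0. b0 i * (a i + (\<Sum>k<M. cc k i * a (m0 + k)))) = 0"
      using z by (simp add: split xsum distrib_left sum.distrib)
    then obtain c0 where hc0: "\<forall>i<m0. a i + (\<Sum>k<M. cc k i * a (m0 + k)) = (\<Sum>j<mr. rel0 j i * c0 j)"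
      using K20[of "\<lambda>i. a i + (\<Sum>k<M. cc k i * a (m0 + k))"] by blast
    define c where "c j = (if j < mr then c0 j else - a (m0 + (j - mr)))" for j
    have "a i = (\<Sum>j<pp. rel j i * c j)" if i: "i < m" for i
    proof -
      have e: "(\<Sum>j<pp. rel j i * c j) = (\<Sum>j<mr. rel j i * c0 j) + (\<Sum>k<M. rel (mr + k) i * - a (m0 + k))"
        unfolding pp_def sum_split_add by (simp add: c_def)
      show ?thesis
      proof (cases "i < m0")
        case True
        have "(\<Sum>k<M. rel (mr + k) i * - a (m0 + k)) = - (\<Sum>k<M. cc k i * a (m0 + k))"
          using True by (simp add: rel_def sum_negf)
        then show ?thesis unfolding e using True hc0 by (simp add: rel_def algebra_simps)
      next
        case False
        define k0 where "k0 = i - m0"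
        have k0: "k0 < M" "i = m0 + k0" using i False by (auto simp: k0_def m_def)
        have "(\<Sum>k<M. rel (mr + k) i * - a (m0 + k)) = (\<Sum>k<M. if k = k0 then a (m0 + k0) else 0)"
          by (rule sum.cong[OF refl]) (auto simp: rel_def k0)
        also have "\<dots> = a i" using k0 by (simp add: sum.delta')
        finally show ?thesis unfolding e using False by (simp add: rel_def)
      qed
    qed
    then show "\<exists>c. \<forall>i<m. a i = (\<Sum>j<pp. rel j i * c j)" by blast
  qed
  have c5: "(\<Sum>l<m. d l * b l) = 1"
    unfolding m_def sum_split_add by (simp add: d_def b_def one)
  show ?thesis
    by (rule exI[of _ m], rule exI[of _ b], rule exI[of _ pp], rule exI[of _ rel], rule exI[of _ d])
       (intro conjI c1 c2 c3 c4 c5)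
qed

theorem theorem4p7:
  fixes \<phi> :: "'k::field \<Rightarrow> 'a::ring_1" and I :: "'a set"
  assumes "k_algebra \<phi>"
    and "fp_algebra \<phi> UNIV"
    and "right_ideal I"
    and "fp_right_ideal I"
    and "left_span I = UNIV"
  shows "fp_algebra \<phi> {\<phi> c + x | c x. x \<in> I}"
proof -
  note kalg = assms(1)
  obtain n :: nat and g0 :: "nat \<Rightarrow> 'a" and R0 :: "'k free_alg set"
    where surj0: "UNIV = fa_eval \<phi> g0 ` free_alg_n n" and finR: "finite R0" and RF: "R0 \<subseteq> free_alg_n n"
      and ker: "{p \<in> free_alg_n n. fa_eval \<phi> g0 p = 0} = fa_ideal_gen n R0"
    using assms(2) unfolding fp_algebra_def by blast
  show ?thesis
  proof (cases "1 \<in> I")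
    case True
    have "{\<phi> c + x | c x. x \<in> I} = UNIV"
    proof (intro set_eqI iffI)
      fix y :: 'a
      have "1 * y \<in> I" using True assms(3) unfolding right_ideal_def by blast
      then have yI: "y \<in> I" by simp
      show "y \<in> {\<phi> c + x | c x. x \<in> I}"
        by (intro CollectI exI[of _ 0] exI[of _ y]) (simp add: phi_0[OF kalg] yI)
    qed simp
    then show ?thesis using assms(2) by simp
  next
    case False
    obtain m :: nat and b :: "nat \<Rightarrow> 'a" and pp :: nat and rel d where
      nb: "\<forall>i<m. b i \<in> I" and nI: "I = {(\<Sum>i<m. b i * a i) | a. True}"
      and nK1: "\<forall>j<pp. (\<Sum>i<m. b i * rel j i) = 0"
      and nK2: "\<forall>a. (\<Sum>i<m. b i * a i) = 0 \<longrightarrow> (\<exists>c. \<forall>i<m. a i = (\<Sum>j<pp. rel j i * c j))"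
      and ndb: "(\<Sum>l<m. d l * b l) = 1"
      using normalize[OF assms(3,4,5)] by blast
    define pre where "pre x = (SOME p. p \<in> free_alg_n n \<and> fa_eval \<phi> g0 p = x)" for x
    have pre: "pre x \<in> free_alg_n n \<and> fa_eval \<phi> g0 (pre x) = x" for x
    proof -
      have "x \<in> fa_eval \<phi> g0 ` free_alg_n n" using surj0 by simp
      then have "\<exists>p. p \<in> free_alg_n n \<and> fa_eval \<phi> g0 p = x" by blast
      then show ?thesis unfolding pre_def by (rule someI_ex)
    qed
    interpret E: evl n m pp R0 "\<lambda>l. pre (d l)" "\<lambda>k. pre (b k)" "\<lambda>j i. pre (rel j i)" \<phi> g0 b d rel I
    proof (unfold_locales)
      show "R0 \<subseteq> free_alg_n n" by (rule RF)
      show "finite R0" by (rule finR)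
      show "\<And>l. pre (d l) \<in> free_alg_n n" using pre by blast
      show "\<And>k. pre (b k) \<in> free_alg_n n" using pre by blast
      show "\<And>j i. pre (rel j i) \<in> free_alg_n n" using pre by blast
      show "k_algebra \<phi>" by (rule kalg)
      show "{p \<in> free_alg_n n. fa_eval \<phi> g0 p = 0} = fa_ideal_gen n R0" by (rule ker)
      show "\<And>l. fa_eval \<phi> g0 (pre (d l)) = d l" using pre by blast
      show "\<And>k. fa_eval \<phi> g0 (pre (b k)) = b k" using pre by blast
      show "\<And>j i. fa_eval \<phi> g0 (pre (rel j i)) = rel j i" using pre by blast
      show "\<And>x. \<exists>p\<in>free_alg_n n. fa_eval \<phi> g0 p = x" using pre by blast
      show "\<And>i. i < m \<Longrightarrow> b i \<in> I" using nb by blast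
      show "I = {(\<Sum>i<m. b i * a i) | a. True}" by (rule nI)
      show "\<And>j. j < pp \<Longrightarrow> (\<Sum>i<m. b i * rel j i) = 0" using nK1 by blast
      show "\<And>a. (\<Sum>i<m. b i * a i) = 0 \<Longrightarrow> \<exists>c. \<forall>i<m. a i = (\<Sum>j<pp. rel j i * c j)" using nK2 by blast
      show "(\<Sum>l<m. d l * b l) = 1" by (rule ndb)
      show "right_ideal I" by (rule assms(3))
      show "1 \<notin> I" by (rule False)
    qed
    show ?thesis using E.fp_BB unfolding E.BB_def .
  qed
qed

end
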